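(* Let $(M_1,\alpha_1)$, $(M_2,\alpha_2)$ be Riemannian manifolds of dimensions $n_1,n_2$, $M=M_1\times M_2$, and let $f:[0,\infty)^2\to[0,\infty)$ be smooth (on the complement of the origin) with $f(\lambda s,\lambda t)=\lambda f(s,t)$ for $\lambda>0$ and $f(s,t)\neq0$ for $(s,t)\neq(0,0)$. Define $F(x,y)=\sqrt{f(\alpha_1(x_1,y_1)^2,\alpha_2(x_2,y_2)^2)}$ for $x=(x_1,x_2)$, $y=y_1\oplus y_2\in T_{x_1}M_1\oplus T_{x_2}M_2$. Then the matrix $g_{ij}=\frac12[F^2]_{y^iy^j}$ is positive definite for all $y\neq0$ if and only if, evaluated at $(s,t)=(\alpha_1^2,\alpha_2^2)$, $$f_s>0,\quad f_t>0,\quad f_s+2sf_{ss}>0,\quad f_t+2tf_{tt}>0,\quad f_sf_t-2ff_{st}>0,$$ and in that case $\det(g_{ij})=h(\alpha_1^2,\alpha_2^2)\det(\bar g_{ab})\det(\bar g_{\alpha\beta})$ with $h=(f_s)^{n_1-1}(f_t)^{n_2-1}(f_sf_t-2ff_{st})$, where $\alpha_1^2=\bar g_{ab}y^ay^b$, $\alpha_2^2=\bar g_{\alpha\beta}y^\alpha y^\beta$ in product coordinates.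
   Context: Coordinates $(x^a)$ on $M_1$ and $(x^\alpha)$ on $M_2$ give coordinates $(x^a,x^\alpha)$ on $M$ and $(y^a,y^\alpha)$ on tangent spaces; $\bar g_{ab}$, $\bar g_{\alpha\beta}$ are the components of the Riemannian metrics $\alpha_1,\alpha_2$. *)

theory Defs
  imports "HOL-Analysis.Analysis"
begin

definition pd_s :: "(real \<Rightarrow> real \<Rightarrow> real) \<Rightarrow> real \<Rightarrow> real \<Rightarrow> real" where
  "pd_s f s t = deriv (\<lambda>u. f u t) s"

definition pd_t :: "(real \<Rightarrow> real \<Rightarrow> real) \<Rightarrow> real \<Rightarrow> real \<Rightarrow> real" where
  "pd_t f s t = deriv (\<lambda>u. f s u) t"

fun Ck_on2 :: "nat \<Rightarrow> (real \<times> real) set \<Rightarrow> (real \<Rightarrow> real \<Rightarrow> real) \<Rightarrow> bool" where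
  "Ck_on2 0 U f = continuous_on U (\<lambda>p. f (fst p) (snd p))"
| "Ck_on2 (Suc k) U f =
     (continuous_on U (\<lambda>p. f (fst p) (snd p)) \<and>
      (\<forall>p\<in>U. (\<lambda>u. f u (snd p)) differentiable (at (fst p)) \<and>
              (\<lambda>u. f (fst p) u) differentiable (at (snd p))) \<and>
      Ck_on2 k U (pd_s f) \<and> Ck_on2 k U (pd_t f))"

definition smooth_on2 :: "(real \<times> real) set \<Rightarrow> (real \<Rightarrow> real \<Rightarrow> real) \<Rightarrow> bool" where
  "smooth_on2 U f \<longleftrightarrow> (\<forall>k. Ck_on2 k U f)"

definition punctured_quadrant :: "(real \<times> real) set" where
  "punctured_quadrant = {p. 0 \<le> fst p \<and> 0 \<le> snd p \<and> p \<noteq> (0, 0)}"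

definition pos_def :: "real^'n^'n \<Rightarrow> bool" where
  "pos_def M \<longleftrightarrow> (\<forall>v. v \<noteq> 0 \<longrightarrow> v \<bullet> (M *v v) > 0)"

definition comp1 :: "real^('n1::finite + 'n2::finite) \<Rightarrow> real^'n1" where
  "comp1 y = (\<chi> a. y $ Inl a)"

definition comp2 :: "real^('n1::finite + 'n2::finite) \<Rightarrow> real^'n2" where
  "comp2 y = (\<chi> b. y $ Inr b)"

definition alpha1_sq :: "real^'n1^'n1 \<Rightarrow> real^('n1::finite + 'n2::finite) \<Rightarrow> real" where
  "alpha1_sq A y = comp1 y \<bullet> (A *v comp1 y)"

definition alpha2_sq :: "real^'n2^'n2 \<Rightarrow> real^('n1::finite + 'n2::finite) \<Rightarrow> real" where
  "alpha2_sq B y = comp2 y \<bullet> (B *v comp2 y)"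

definition Fprod :: "real^'n1^'n1 \<Rightarrow> real^'n2^'n2 \<Rightarrow> (real \<Rightarrow> real \<Rightarrow> real)
    \<Rightarrow> real^('n1::finite + 'n2::finite) \<Rightarrow> real" where
  "Fprod A B f y = sqrt (f (alpha1_sq A y) (alpha2_sq B y))"

definition pdy :: "'i \<Rightarrow> (real^'i::finite \<Rightarrow> real) \<Rightarrow> real^'i \<Rightarrow> real" where
  "pdy i \<phi> y = deriv (\<lambda>r. \<phi> (y + r *\<^sub>R axis i 1)) 0"

definition gmat :: "real^'n1^'n1 \<Rightarrow> real^'n2^'n2 \<Rightarrow> (real \<Rightarrow> real \<Rightarrow> real)
    \<Rightarrow> real^('n1::finite + 'n2::finite) \<Rightarrow> real^('n1::finite + 'n2::finite)^('n1::finite + 'n2::finite)" where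
  "gmat A B f y = (\<chi> i j. (1/2) * pdy i (pdy j (\<lambda>z. (Fprod A B f z)^2)) y)"

end

theory Submission
  imports Defs
begin

definition pad1 :: "real^'a \<Rightarrow> real^('a::finite + 'b::finite)" where
  "pad1 x = (\<chi> i. case i of Inl a \<Rightarrow> x$a | Inr b \<Rightarrow> 0)"
definition pad2 :: "real^'b \<Rightarrow> real^('a::finite + 'b::finite)" where
  "pad2 x = (\<chi> i. case i of Inl a \<Rightarrow> 0 | Inr b \<Rightarrow> x$b)"
definition bdiag :: "real^'a^'a \<Rightarrow> real^'b^'b \<Rightarrow> real^('a::finite + 'b::finite)^('a + 'b)" where
  "bdiag X Y = (\<chi> i j. case i of Inl a \<Rightarrow> (case j of Inl a' \<Rightarrow> X$a$a' | Inr _ \<Rightarrow> 0)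
                                | Inr b \<Rightarrow> (case j of Inl _ \<Rightarrow> 0 | Inr b' \<Rightarrow> Y$b$b'))"
definition outer :: "real^'n \<Rightarrow> real^'n \<Rightarrow> real^'n^'n" where
  "outer x u = (\<chi> i j. x$i * u$j)"

lemma sum_UNIV_Plus: "(\<Sum>i\<in>(UNIV::('a::finite+'b::finite) set). g i) = (\<Sum>a\<in>UNIV. g (Inl a)) + (\<Sum>b\<in>UNIV. g (Inr b))"
  by (subst UNIV_Plus_UNIV[symmetric], subst sum.Plus) (auto simp: comp_def)

lemma prod_UNIV_Plus: "(\<Prod>i\<in>(UNIV::('a::finite+'b::finite) set). g i) = (\<Prod>a\<in>UNIV. g (Inl a)) * (\<Prod>b\<in>UNIV. g (Inr b))"
  by (subst UNIV_Plus_UNIV[symmetric], subst prod.Plus) (auto simp: comp_def)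

lemma inner_Plus: "(v::real^('a::finite+'b::finite)) \<bullet> w = comp1 v \<bullet> comp1 w + comp2 v \<bullet> comp2 w"
  by (simp add: inner_vec_def sum_UNIV_Plus comp1_def comp2_def)

lemma comp1_pad1[simp]: "comp1 (pad1 x :: real^('a::finite+'b::finite)) = x"
  and comp2_pad1[simp]: "comp2 (pad1 x :: real^('a::finite+'b::finite)) = 0"
  and comp1_pad2[simp]: "comp1 (pad2 y :: real^('a::finite+'b::finite)) = 0"
  and comp2_pad2[simp]: "comp2 (pad2 y :: real^('a::finite+'b::finite)) = y"
  by (auto simp: comp1_def comp2_def pad1_def pad2_def vec_eq_iff)

lemma comp_add[simp]: "comp1 (v + w) = comp1 v + comp1 w" "comp2 (v + w) = comp2 v + comp2 w"
  and comp_scale[simp]: "comp1 (c *\<^sub>R v) = c *\<^sub>R comp1 v" "comp2 (c *\<^sub>R v) = c *\<^sub>R comp2 v"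
  and comp_diff[simp]: "comp1 (v - w) = comp1 v - comp1 w" "comp2 (v - w) = comp2 v - comp2 w"
  and comp_zero[simp]: "comp1 0 = 0" "comp2 0 = 0"
  by (auto simp: comp1_def comp2_def vec_eq_iff)

lemma pad_decomp: "v = pad1 (comp1 v) + pad2 (comp2 v)"
  by (auto simp: comp1_def comp2_def pad1_def pad2_def vec_eq_iff split: sum.splits)

lemma pad_eq0: "pad1 x + pad2 y = 0 \<longleftrightarrow> x = 0 \<and> y = 0"
  by (metis add.right_neutral comp1_pad1 comp1_pad2 comp2_pad1 comp2_pad2 comp_add comp_zero pad_decomp)

lemma inner_pad1[simp]: "pad1 x \<bullet> v = x \<bullet> comp1 v" "v \<bullet> pad1 x = comp1 v \<bullet> x"
  and inner_pad2[simp]: "pad2 y \<bullet> v = y \<bullet> comp2 v" "v \<bullet> pad2 y = comp2 v \<bullet> y"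
  by (simp_all add: inner_Plus)

lemma bdiag_mv: "bdiag X Y *v v = pad1 (X *v comp1 v) + pad2 (Y *v comp2 v)"
  by (auto simp: bdiag_def pad1_def pad2_def comp1_def comp2_def vec_eq_iff matrix_vector_mult_def
       sum_UNIV_Plus split: sum.splits)

lemma outer_mv: "outer x u *v v = (u \<bullet> v) *\<^sub>R x"
  by (auto simp: outer_def vec_eq_iff matrix_vector_mult_def inner_vec_def sum_distrib_left mult_ac)

lemma mat_outer: "M ** outer x u = outer (M *v x) u"
  by (auto simp: outer_def vec_eq_iff matrix_matrix_mult_def matrix_vector_mult_def sum_distrib_left sum_distrib_right mult_ac)

lemma outer_outer: "outer x u ** outer z w = (u \<bullet> z) *\<^sub>R outer x w"
  by (auto simp: outer_def vec_eq_iff matrix_matrix_mult_def inner_vec_def sum_distrib_left sum_distrib_right mult_ac)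

lemma outer_add_left: "outer (x + y) u = outer x u + outer y u"
  and outer_add_right: "outer x (u + w) = outer x u + outer x w"
  and outer_scale_left: "outer (c *\<^sub>R x) u = c *\<^sub>R outer x u"
  and outer_scale_right: "outer x (c *\<^sub>R u) = c *\<^sub>R outer x u"
  by (auto simp: outer_def vec_eq_iff algebra_simps)

lemma sym_inner: assumes "transpose A = A" shows "x \<bullet> (A *v y) = (A *v x) \<bullet> (y::real^'n)"
proof -
  have "x \<bullet> (A *v y) = (x v* A) \<bullet> y"
    by (simp add: inner_vec_def matrix_vector_mult_def vector_matrix_mult_def sum_distrib_left sum_distrib_right mult_ac)
       (rule sum.swap)
  also have "x v* A = transpose A *v x" by (simp add: transpose_matrix_vector)
  finally show ?thesis using assms by simp
qed

lemma matrix_add_rdistrib': "((A + B) ** C) = (A ** C) + (B ** C :: real^'n^'m)"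
  by (simp add: matrix_matrix_mult_def vec_eq_iff sum.distrib[symmetric] distrib_right)

lemma outer_mat: "outer x u ** M = outer x (u v* M)"
  by (auto simp: outer_def vec_eq_iff matrix_matrix_mult_def vector_matrix_mult_def sum_distrib_left mult_ac)

lemma det_row_replace_id:
  "det ((\<chi> i. if i = k then r else row i (mat 1)) :: real^'n^'n) = r$k"
proof -
  have "(\<Sum>i\<in>UNIV. r$i *s row i (mat 1 :: real^'n^'n)) = r"
    by (auto simp: vec_eq_iff row_def mat_def sum_component if_distrib cong: if_cong)
  then show ?thesis using cramer_lemma_transpose[of k r "mat 1 :: real^'n^'n"] by (simp only: det_I mult_1_right)
qed

lemma det_rank1: "det (mat 1 + outer x u :: real^'n^'n) = 1 + u \<bullet> x"
proof (cases "x = 0")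
  case True
  then have "outer x u = 0" by (simp add: outer_def vec_eq_iff)
  then show ?thesis using True by simp
next
  case False
  then obtain k where xk: "x$k \<noteq> 0" by (auto simp: vec_eq_iff)
  define E where "E = (\<chi> i j. if j = k then x$i else (mat 1::real^'n^'n)$i$j)"
  have dE: "det E = x$k"
    using cramer_lemma[where A="mat 1 :: real^'n^'n" and k=k and x=x] by (simp only: E_def matrix_vector_mul_lid det_I mult_1_right)
  define v where "v = u v* E"
  have vax: "(M *v axis j 1) $ i = M $ i $ j" for M :: "real^'n^'n" and i j
    by (metis cart_eq_inner_axis matrix_vector_mul_component)
  have Ex: "E *v axis k 1 = x"
    by (simp add: vec_eq_iff vax E_def)
  have eq: "(mat 1 + outer x u) ** E = E ** (mat 1 + outer (axis k 1) v)"
    by (simp add: matrix_add_rdistrib' matrix_add_ldistrib outer_mat mat_outer Ex v_def)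
  have vk: "v$k = u \<bullet> x"
    by (simp add: v_def vector_matrix_mult_def E_def inner_vec_def mult.commute)
  have r: "mat 1 + outer (axis k 1) v = (\<chi> i. if i = k then axis k 1 + v else row i (mat 1 :: real^'n^'n))"
    by (auto simp: vec_eq_iff outer_def row_def mat_def axis_def)
  have "det (mat 1 + outer x u) * det E = det E * det (mat 1 + outer (axis k 1) v)"
    using eq by (metis det_mul)
  also have "det (mat 1 + outer (axis k 1) v) = 1 + u \<bullet> x"
    unfolding r det_row_replace_id by (simp add: vk)
  finally show ?thesis using dE xk by simp
qed


lemma det_rank2:
  assumes c: "1 + u \<bullet> x \<noteq> 0"
  shows "det (mat 1 + outer x u + outer z w :: real^'n^'n) = (1 + u \<bullet> x) * (1 + w \<bullet> z) - (u \<bullet> z) * (w \<bullet> x)"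
proof -
  define c where "c = 1 + u \<bullet> x"
  have c0: "c \<noteq> 0" using assms by (simp add: c_def)
  define z' where "z' = z - ((u \<bullet> z) / c) *\<^sub>R x"
  have uz': "u \<bullet> z' = (u \<bullet> z) / c"
  proof -
    have "u \<bullet> z' = u \<bullet> z - ((u \<bullet> z) / c) * (u \<bullet> x)"
      by (simp add: z'_def inner_diff_right)
    also have "u \<bullet> x = c - 1" by (simp add: c_def)
    finally show ?thesis using c0 by (simp add: field_simps)
  qed
  have zz: "z' + (u \<bullet> z') *\<^sub>R x = z"
    unfolding uz' by (simp add: z'_def)
  have "(mat 1 + outer x u) ** (mat 1 + outer z' w) = mat 1 + outer x u + outer z' w + (u \<bullet> z') *\<^sub>R outer x w"
    by (simp add: matrix_add_rdistrib' matrix_add_ldistrib outer_outer)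
  also have "\<dots> = mat 1 + outer x u + outer (z' + (u \<bullet> z') *\<^sub>R x) w"
    by (simp add: outer_add_left outer_scale_left)
  finally have "mat 1 + outer x u + outer z w = (mat 1 + outer x u) ** (mat 1 + outer z' w)"
    using zz by simp
  then have "det (mat 1 + outer x u + outer z w) = c * (1 + w \<bullet> z')"
    by (simp add: det_mul det_rank1 c_def)
  also have "w \<bullet> z' = w \<bullet> z - ((u \<bullet> z) / c) * (w \<bullet> x)"
    by (simp add: z'_def inner_diff_right)
  also have "c * (1 + (w \<bullet> z - ((u \<bullet> z) / c) * (w \<bullet> x))) = c * (1 + w \<bullet> z) - (u \<bullet> z) * (w \<bullet> x)"
    using c0 by (simp add: field_simps)
  finally show ?thesis by (simp add: c_def)
qed

lemma sum_fun_eqI: "(\<And>a. f (Inl a) = g (Inl a)) \<Longrightarrow> (\<And>b. f (Inr b) = g (Inr b)) \<Longrightarrow> f = g"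
  by (rule ext, case_tac x) auto

lemma map_sum_permutes:
  assumes "p1 permutes (UNIV::'a set)" "p2 permutes (UNIV::'b set)"
  shows "map_sum p1 p2 permutes (UNIV::('a+'b) set)"
proof -
  have b: "bij p1" "bij p2" using assms permutes_bij by blast+
  have "bij (map_sum p1 p2)"
  proof (rule o_bij[of "map_sum (inv p1) (inv p2)"])
    show "map_sum (inv p1) (inv p2) \<circ> map_sum p1 p2 = id"
      using b by (intro sum_fun_eqI) (auto simp: bij_is_inj)
    show "map_sum p1 p2 \<circ> map_sum (inv p1) (inv p2) = id"
      using b by (intro sum_fun_eqI) (auto simp: bij_is_surj surj_f_inv_f)
  qed
  then show ?thesis by (rule bij_imp_permutes) auto
qed

lemma sign_map_sum_left:
  assumes "p permutes (UNIV::'a::finite set)"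
  shows "sign (map_sum p (id::'b::finite\<Rightarrow>'b)) = sign p"
  using assms finite_class.finite_UNIV
proof (induction rule: permutes_induct)
  case id
  have e: "map_sum id id = (id::'a+'b \<Rightarrow> _)" by (intro sum_fun_eqI) auto
  show ?case by (subst e) (simp add: sign_id)
next
  case (swap a b p)
  have e: "map_sum (Transposition.transpose a b \<circ> p) (id::'b\<Rightarrow>'b) = Transposition.transpose (Inl a) (Inl b) \<circ> map_sum p id"
    by (intro sum_fun_eqI) (auto simp: Transposition.transpose_def)
  have pp: "permutation (map_sum p (id::'b\<Rightarrow>'b))"
    by (rule permutes_imp_permutation[OF finite_class.finite_UNIV]) (intro map_sum_permutes swap.hyps permutes_id)
  have pp2: "permutation p" by (rule permutes_imp_permutation[OF finite_class.finite_UNIV swap.hyps(4)])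
  show ?case unfolding e sign_compose[OF permutation_swap_id pp] sign_compose[OF permutation_swap_id pp2] swap.IH
    using swap.hyps by (simp add: sign_swap_id)
qed

lemma sign_map_sum_right:
  assumes "p permutes (UNIV::'b::finite set)"
  shows "sign (map_sum (id::'a::finite\<Rightarrow>'a) p) = sign p"
  using assms finite_class.finite_UNIV
proof (induction rule: permutes_induct)
  case id
  have e: "map_sum id id = (id::'a+'b \<Rightarrow> _)" by (intro sum_fun_eqI) auto
  show ?case by (subst e) (simp add: sign_id)
next
  case (swap a b p)
  have e: "map_sum (id::'a\<Rightarrow>'a) (Transposition.transpose a b \<circ> p) = Transposition.transpose (Inr a) (Inr b) \<circ> map_sum id p"
    by (intro sum_fun_eqI) (auto simp: Transposition.transpose_def)
  have pp: "permutation (map_sum (id::'a\<Rightarrow>'a) p)"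
    by (rule permutes_imp_permutation[OF finite_class.finite_UNIV]) (intro map_sum_permutes swap.hyps permutes_id)
  have pp2: "permutation p" by (rule permutes_imp_permutation[OF finite_class.finite_UNIV swap.hyps(4)])
  show ?case unfolding e sign_compose[OF permutation_swap_id pp] sign_compose[OF permutation_swap_id pp2] swap.IH
    using swap.hyps by (simp add: sign_swap_id)
qed

lemma sign_map_sum:
  assumes "p1 permutes (UNIV::'a::finite set)" "p2 permutes (UNIV::'b::finite set)"
  shows "sign (map_sum p1 p2) = sign p1 * sign p2"
proof -
  have e: "map_sum p1 p2 = map_sum p1 id \<circ> map_sum id p2"
    by (intro sum_fun_eqI) auto
  have "permutation (map_sum p1 (id::'b\<Rightarrow>'b))" "permutation (map_sum (id::'a\<Rightarrow>'a) p2)"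
    by (rule permutes_imp_permutation[OF finite_class.finite_UNIV], intro map_sum_permutes assms permutes_id)+
  then show ?thesis unfolding e
    by (simp add: sign_compose sign_map_sum_left sign_map_sum_right assms)
qed

lemma det_bdiag: "det (bdiag X Y) = det X * det (Y :: real^'b::finite^'b)"
proof -
  let ?P1 = "{p. p permutes (UNIV::'a set)}"
  let ?P2 = "{p. p permutes (UNIV::'b set)}"
  let ?P = "{p. p permutes (UNIV::('a+'b) set)}"
  let ?t = "\<lambda>p. of_int (sign p) * (\<Prod>i\<in>UNIV. bdiag X Y $ i $ p i)"
  let ?m = "\<lambda>(p1,p2). map_sum p1 p2"
  define K where "K = ?m ` (?P1 \<times> ?P2)"
  have KP: "K \<subseteq> ?P" by (auto simp: K_def map_sum_permutes)
  have zero: "?t p = 0" if "p \<in> ?P - K" for p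
  proof (rule ccontr)
    assume "?t p \<noteq> 0"
    then have nz: "bdiag X Y $ i $ p i \<noteq> 0" for i by auto
    have l: "\<exists>a'. p (Inl a) = Inl a'" for a
      using nz[of "Inl a"] by (cases "p (Inl a)") (auto simp: bdiag_def)
    have r: "\<exists>b'. p (Inr b) = Inr b'" for b
      using nz[of "Inr b"] by (cases "p (Inr b)") (auto simp: bdiag_def)
    define p1 where "p1 a = projl (p (Inl a))" for a
    define p2 where "p2 b = projr (p (Inr b))" for b
    have pe: "p = map_sum p1 p2"
    proof
      fix x show "p x = map_sum p1 p2 x"
      proof (cases x)
        case (Inl a)
        obtain a' where "p (Inl a) = Inl a'" using l by blast
        then show ?thesis using Inl by (simp add: p1_def)
      next
        case (Inr b)
        obtain b' where "p (Inr b) = Inr b'" using r by blast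
        then show ?thesis using Inr by (simp add: p2_def)
      qed
    qed
    have ip: "inj p" using that permutes_inj by blast
    have "inj p1"
    proof
      fix a a' assume "p1 a = p1 a'"
      then have "p (Inl a) = p (Inl a')" using l[of a] l[of a'] by (auto simp: p1_def)
      then show "a = a'" using ip by (auto dest: injD)
    qed
    then have "bij p1" using finite_UNIV_inj_surj[of p1] by (simp add: bij_def)
    then have 1: "p1 permutes UNIV" by (rule bij_imp_permutes) auto
    have "inj p2"
    proof
      fix a a' assume "p2 a = p2 a'"
      then have "p (Inr a) = p (Inr a')" using r[of a] r[of a'] by (auto simp: p2_def)
      then show "a = a'" using ip by (auto dest: injD)
    qed
    then have "bij p2" using finite_UNIV_inj_surj[of p2] by (simp add: bij_def)
    then have 2: "p2 permutes UNIV" by (rule bij_imp_permutes) auto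
    have "p \<in> K" using 1 2 pe by (auto simp: K_def)
    then show False using that by simp
  qed
  have inj: "inj_on ?m (?P1 \<times> ?P2)"
  proof (rule inj_onI, clarsimp)
    fix p1 p2 q1 q2 assume "map_sum p1 p2 = map_sum q1 q2"
    then have "map_sum p1 p2 (Inl a) = map_sum q1 q2 (Inl a)" "map_sum p1 p2 (Inr b) = map_sum q1 q2 (Inr b)" for a b
      by simp_all
    then show "p1 = q1 \<and> p2 = q2" by (auto simp: fun_eq_iff)
  qed
  have "det (bdiag X Y) = sum ?t ?P" by (simp add: det_def)
  also have "\<dots> = sum ?t K"
    by (rule sum.mono_neutral_right) (use KP zero in auto)
  also have "\<dots> = sum (?t \<circ> ?m) (?P1 \<times> ?P2)"
    unfolding K_def by (rule sum.reindex[OF inj])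
  also have "\<dots> = (\<Sum>(p1,p2)\<in>?P1 \<times> ?P2. (of_int (sign p1) * (\<Prod>a\<in>UNIV. X$a$p1 a)) * (of_int (sign p2) * (\<Prod>b\<in>UNIV. Y$b$p2 b)))"
  proof (rule sum.cong, simp, clarsimp)
    fix p1 p2 assume "p1 permutes (UNIV::'a set)" "p2 permutes (UNIV::'b set)"
    then show "of_int (sign (map_sum p1 p2)) * (\<Prod>i\<in>UNIV. bdiag X Y $ i $ map_sum p1 p2 i) =
        of_int (sign p1) * (\<Prod>a\<in>UNIV. X $ a $ p1 a) * (of_int (sign p2) * (\<Prod>b\<in>UNIV. Y $ b $ p2 b))"
      by (simp add: sign_map_sum prod_UNIV_Plus bdiag_def)
  qed
  also have "\<dots> = det X * det Y"
    by (simp add: det_def sum_product sum.cartesian_product)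
  finally show ?thesis .
qed

lemma frechet2:
  fixes g :: "real \<Rightarrow> real \<Rightarrow> real"
  assumes U: "open U" "(s,t) \<in> U"
    and d: "\<forall>p\<in>U. (\<lambda>u. g u (snd p)) differentiable (at (fst p)) \<and> (\<lambda>u. g (fst p) u) differentiable (at (snd p))"
    and c: "continuous_on U (\<lambda>p. pd_t g (fst p) (snd p))"
  shows "((\<lambda>p. g (fst p) (snd p)) has_derivative (\<lambda>h. pd_s g s t * fst h + pd_t g s t * snd h)) (at (s,t))"
proof -
  obtain X B where XB: "open X" "open B" "(s,t) \<in> X \<times> B" "X \<times> B \<subseteq> U"
    using open_prod_elim[OF U] by blast
  obtain r where r: "r > 0" "ball t r \<subseteq> B" using XB open_contains_ball by blast
  define Y where "Y = ball t r"
  have XY: "X \<times> Y \<subseteq> U" using XB r by (auto simp: Y_def)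
  have tY: "t \<in> Y" using r by (simp add: Y_def)
  have sX: "s \<in> X" using XB by simp
  have fx: "((\<lambda>x. g x t) has_derivative (*) (pd_s g s t)) (at s within X)"
  proof -
    have "(\<lambda>u. g u t) differentiable (at s)" using d U by auto
    then have "DERIV (\<lambda>u. g u t) s :> pd_s g s t"
      unfolding pd_s_def by (simp add: DERIV_deriv_iff_real_differentiable)
    then show ?thesis unfolding has_field_derivative_def by (rule has_derivative_at_withinI)
  qed
  have fy: "((\<lambda>y. g x y) has_derivative blinfun_apply (blinfun_mult_right (pd_t g x y))) (at y within Y)"
    if "x \<in> X" "y \<in> Y" for x y
  proof -
    have "(x,y) \<in> U" using XY that by auto
    then have "(\<lambda>u. g x u) differentiable (at y)" using d by auto
    then have "DERIV (\<lambda>u. g x u) y :> pd_t g x y"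
      unfolding pd_t_def by (simp add: DERIV_deriv_iff_real_differentiable)
    then show ?thesis unfolding has_field_derivative_def by (simp add: has_derivative_at_withinI)
  qed
  have "isCont (\<lambda>p. pd_t g (fst p) (snd p)) (s,t)"
    using c U continuous_on_eq_continuous_at by blast
  then have "continuous (at (s,t) within X \<times> Y) (\<lambda>p. pd_t g (fst p) (snd p))"
    using continuous_at_imp_continuous_within by blast
  then have cc: "continuous (at (s,t) within X \<times> Y) (\<lambda>(x,y). blinfun_mult_right (pd_t g x y))"
    using bounded_linear.continuous[OF bounded_linear_blinfun_mult_right] by (simp add: case_prod_beta')
  have "((\<lambda>(x,y). g x y) has_derivative (\<lambda>(tx, ty). pd_s g s t * tx + blinfun_apply (blinfun_mult_right (pd_t g s t)) ty)) (at (s,t) within X \<times> Y)"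
    by (rule has_derivative_partialsI[OF fx fy cc tY]) (auto simp: Y_def)
  then have "((\<lambda>(x,y). g x y) has_derivative (\<lambda>(tx, ty). pd_s g s t * tx + blinfun_apply (blinfun_mult_right (pd_t g s t)) ty)) (at (s,t))"
    using at_within_open[of "(s,t)" "X \<times> Y"] XB tY by (simp add: open_Times Y_def)
  then show ?thesis by (simp add: case_prod_beta')
qed

lemma chain2:
  fixes g :: "real \<Rightarrow> real \<Rightarrow> real"
  assumes F: "((\<lambda>p. g (fst p) (snd p)) has_derivative (\<lambda>h. a * fst h + b * snd h)) (at p)"
    and p: "p = (\<sigma> z, \<tau> z)"
    and s: "(\<sigma> has_derivative \<sigma>') (at z within S)" and t: "(\<tau> has_derivative \<tau>') (at z within S)"
  shows "((\<lambda>z. g (\<sigma> z) (\<tau> z)) has_derivative (\<lambda>h. a * \<sigma>' h + b * \<tau>' h)) (at z within S)"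
proof -
  have "((\<lambda>x. (\<lambda>p. g (fst p) (snd p)) (\<sigma> x, \<tau> x)) has_derivative (\<lambda>x. (\<lambda>h. a * fst h + b * snd h) (\<sigma>' x, \<tau>' x))) (at z within S)"
    by (rule has_derivative_compose[OF has_derivative_Pair[OF s t]]) (use F p in simp)
  then show ?thesis by simp
qed

lemma dirderiv:
  fixes \<phi> :: "'a::real_normed_vector \<Rightarrow> real"
  assumes "(\<phi> has_derivative \<phi>') (at z)"
  shows "((\<lambda>r. \<phi> (z + r *\<^sub>R v)) has_real_derivative \<phi>' v) (at 0)"
proof -
  have l: "((\<lambda>r. z + r *\<^sub>R v) has_derivative (\<lambda>r. r *\<^sub>R v)) (at 0)"
    by (auto intro!: derivative_eq_intros)
  have "((\<lambda>r. \<phi> (z + r *\<^sub>R v)) has_derivative (\<lambda>r. \<phi>' (r *\<^sub>R v))) (at 0)"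
    using has_derivative_compose[OF l, of \<phi>] assms by simp
  moreover have "(\<lambda>r. \<phi>' (r *\<^sub>R v)) = (*) (\<phi>' v)"
    using has_derivative_bounded_linear[OF assms] by (auto simp: fun_eq_iff linear_simps(5) bounded_linear.linear)
  ultimately show ?thesis unfolding has_field_derivative_def by simp
qed

lemma pdy_eq:
  assumes "(\<phi> has_derivative \<phi>') (at z)"
  shows "pdy i \<phi> z = \<phi>' (axis i 1)"
  unfolding pdy_def using dirderiv[OF assms] by (rule DERIV_imp_deriv)

locale hom2 =
  fixes f :: "real \<Rightarrow> real \<Rightarrow> real" and U :: "(real \<times> real) set"
  assumes U_open: "open U" and PU: "punctured_quadrant \<subseteq> U"
    and ck: "Ck_on2 (Suc (Suc 0)) U f"
    and homog: "\<forall>l s t. 0 < l \<longrightarrow> 0 \<le> s \<longrightarrow> 0 \<le> t \<longrightarrow> f (l * s) (l * t) = l * f s t"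
begin

lemma PQ: "(s,t) \<in> punctured_quadrant \<longleftrightarrow> 0 \<le> s \<and> 0 \<le> t \<and> (s \<noteq> 0 \<or> t \<noteq> 0)"
  by (auto simp: punctured_quadrant_def)

lemma PinU: "0 \<le> s \<Longrightarrow> 0 \<le> t \<Longrightarrow> (s \<noteq> 0 \<or> t \<noteq> 0) \<Longrightarrow> (s,t) \<in> U"
  using PU PQ by blast

lemma ck_facts:
  "continuous_on U (\<lambda>p. f (fst p) (snd p))"
  "\<forall>p\<in>U. (\<lambda>u. f u (snd p)) differentiable (at (fst p)) \<and> (\<lambda>u. f (fst p) u) differentiable (at (snd p))"
  "continuous_on U (\<lambda>p. pd_s f (fst p) (snd p))"
  "\<forall>p\<in>U. (\<lambda>u. pd_s f u (snd p)) differentiable (at (fst p)) \<and> (\<lambda>u. pd_s f (fst p) u) differentiable (at (snd p))"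
  "continuous_on U (\<lambda>p. pd_t f (fst p) (snd p))"
  "\<forall>p\<in>U. (\<lambda>u. pd_t f u (snd p)) differentiable (at (fst p)) \<and> (\<lambda>u. pd_t f (fst p) u) differentiable (at (snd p))"
  "continuous_on U (\<lambda>p. pd_s (pd_s f) (fst p) (snd p))"
  "continuous_on U (\<lambda>p. pd_t (pd_s f) (fst p) (snd p))"
  "continuous_on U (\<lambda>p. pd_s (pd_t f) (fst p) (snd p))"
  "continuous_on U (\<lambda>p. pd_t (pd_t f) (fst p) (snd p))"
  using ck by auto

lemma dsf: "(s,t) \<in> U \<Longrightarrow> ((\<lambda>u. f u t) has_real_derivative pd_s f s t) (at s)"
  and dtf: "(s,t) \<in> U \<Longrightarrow> ((\<lambda>u. f s u) has_real_derivative pd_t f s t) (at t)"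
  and dsfs: "(s,t) \<in> U \<Longrightarrow> ((\<lambda>u. pd_s f u t) has_real_derivative pd_s (pd_s f) s t) (at s)"
  and dtfs: "(s,t) \<in> U \<Longrightarrow> ((\<lambda>u. pd_s f s u) has_real_derivative pd_t (pd_s f) s t) (at t)"
  and dsft: "(s,t) \<in> U \<Longrightarrow> ((\<lambda>u. pd_t f u t) has_real_derivative pd_s (pd_t f) s t) (at s)"
  and dtft: "(s,t) \<in> U \<Longrightarrow> ((\<lambda>u. pd_t f s u) has_real_derivative pd_t (pd_t f) s t) (at t)"
  using ck_facts(2,4,6) unfolding pd_s_def[of _ s t] pd_t_def[of _ s t]
  by (auto simp: DERIV_deriv_iff_real_differentiable)

lemma Df: "(s,t) \<in> U \<Longrightarrow> ((\<lambda>p. f (fst p) (snd p)) has_derivative (\<lambda>h. pd_s f s t * fst h + pd_t f s t * snd h)) (at (s,t))"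
  by (rule frechet2[OF U_open _ ck_facts(2,5)])
lemma Dfs: "(s,t) \<in> U \<Longrightarrow> ((\<lambda>p. pd_s f (fst p) (snd p)) has_derivative (\<lambda>h. pd_s (pd_s f) s t * fst h + pd_t (pd_s f) s t * snd h)) (at (s,t))"
  by (rule frechet2[OF U_open _ ck_facts(4,8)])
lemma Dft: "(s,t) \<in> U \<Longrightarrow> ((\<lambda>p. pd_t f (fst p) (snd p)) has_derivative (\<lambda>h. pd_s (pd_t f) s t * fst h + pd_t (pd_t f) s t * snd h)) (at (s,t))"
  by (rule frechet2[OF U_open _ ck_facts(6,10)])

lemma radial:
  assumes "(s,t) \<in> U"
  and D: "((\<lambda>p. g (fst p) (snd p)) has_derivative (\<lambda>h. a * fst h + b * snd h)) (at (s,t))"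
  and eq: "\<And>l. 0 < l \<Longrightarrow> g (l * s) (l * t) = l * c + d"
  shows "a * s + b * t = c"
proof -
  have "((\<lambda>l. g (l * s) (l * t)) has_derivative (\<lambda>h. a * (h * s) + b * (h * t))) (at 1)"
    by (rule chain2[OF D]) (auto intro!: derivative_eq_intros)
  then have "((\<lambda>l. l * c + d) has_derivative (\<lambda>h. a * (h * s) + b * (h * t))) (at 1)"
    by (rule has_derivative_transform_within_open[of _ _ _ _ "{0<..}"]) (auto simp: eq)
  moreover have "((\<lambda>l. l * c + d) has_derivative (\<lambda>h. h * c)) (at 1)"
    by (auto intro!: derivative_eq_intros)
  ultimately have "(\<lambda>h. a * (h * s) + b * (h * t)) = (\<lambda>h. h * c)"
    by (rule has_derivative_unique)
  from fun_cong[OF this, of 1] show ?thesis by simp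
qed

lemma I1: assumes "(s,t) \<in> punctured_quadrant" shows "f s t = s * pd_s f s t + t * pd_t f s t"
proof -
  have U: "(s,t) \<in> U" using assms PU by auto
  have "pd_s f s t * s + pd_t f s t * t = f s t"
    by (rule radial[OF U Df[OF U], where d=0]) (use assms homog in \<open>auto simp: PQ\<close>)
  then show ?thesis by (simp add: mult_ac)
qed

lemma fs_hom: assumes "0 < s" "0 \<le> t" "0 < l" shows "pd_s f (l * s) (l * t) = pd_s f s t"
proof -
  have U: "(l * s, l * t) \<in> U" using assms by (intro PinU) auto
  have "((\<lambda>u. f (l * u) (l * t)) has_real_derivative pd_s f (l * s) (l * t) * l) (at s)"
    by (rule DERIV_chain2[where g="\<lambda>u. l * u", OF dsf[OF U]]) (auto intro!: derivative_eq_intros)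
  then have "((\<lambda>u. l * f u t) has_real_derivative pd_s f (l * s) (l * t) * l) (at s)"
    by (rule has_field_derivative_transform_within_open[of _ _ _ "{0<..}"]) (use assms homog in auto)
  moreover have "((\<lambda>u. l * f u t) has_real_derivative l * pd_s f s t) (at s)"
    using assms by (intro DERIV_cmult dsf PinU) auto
  ultimately have "pd_s f (l * s) (l * t) * l = l * pd_s f s t" by (rule DERIV_unique)
  then show ?thesis using assms by simp
qed

lemma ft_hom: assumes "0 \<le> s" "0 < t" "0 < l" shows "pd_t f (l * s) (l * t) = pd_t f s t"
proof -
  have U: "(l * s, l * t) \<in> U" using assms by (intro PinU) auto
  have "((\<lambda>u. f (l * s) (l * u)) has_real_derivative pd_t f (l * s) (l * t) * l) (at t)"
    by (rule DERIV_chain2[where g="\<lambda>u. l * u", OF dtf[OF U]]) (auto intro!: derivative_eq_intros)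
  then have "((\<lambda>u. l * f s u) has_real_derivative pd_t f (l * s) (l * t) * l) (at t)"
    by (rule has_field_derivative_transform_within_open[of _ _ _ "{0<..}"]) (use assms homog in auto)
  moreover have "((\<lambda>u. l * f s u) has_real_derivative l * pd_t f s t) (at t)"
    using assms by (intro DERIV_cmult dtf PinU) auto
  ultimately have "pd_t f (l * s) (l * t) * l = l * pd_t f s t" by (rule DERIV_unique)
  then show ?thesis using assms by simp
qed

lemma I2i: assumes "0 < s" "0 < t" shows "s * pd_s (pd_s f) s t + t * pd_t (pd_s f) s t = 0"
proof -
  have U: "(s,t) \<in> U" using assms by (intro PinU) auto
  have "pd_s (pd_s f) s t * s + pd_t (pd_s f) s t * t = 0"
    by (rule radial[OF U Dfs[OF U], where d="pd_s f s t"]) (use assms fs_hom in auto)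
  then show ?thesis by (simp add: mult_ac)
qed

lemma I3i: assumes "0 < s" "0 < t" shows "s * pd_s (pd_t f) s t + t * pd_t (pd_t f) s t = 0"
proof -
  have U: "(s,t) \<in> U" using assms by (intro PinU) auto
  have "pd_s (pd_t f) s t * s + pd_t (pd_t f) s t * t = 0"
    by (rule radial[OF U Dft[OF U], where d="pd_t f s t"]) (use assms ft_hom in auto)
  then show ?thesis by (simp add: mult_ac)
qed

lemma I4i: assumes "0 < s" "0 < t" shows "s * pd_s (pd_s f) s t + t * pd_s (pd_t f) s t = 0"
proof -
  have U: "(s,t) \<in> U" using assms by (intro PinU) auto
  have "((\<lambda>u. u * pd_s f u t + t * pd_t f u t) has_real_derivative
          (1 * pd_s f s t + s * pd_s (pd_s f) s t) + t * pd_s (pd_t f) s t) (at s)"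
    using DERIV_add[OF DERIV_mult[OF DERIV_ident dsfs[OF U]] DERIV_cmult[OF dsft[OF U], of t]] by (simp add: mult_ac)
  then have "((\<lambda>u. f u t) has_real_derivative
          (1 * pd_s f s t + s * pd_s (pd_s f) s t) + t * pd_s (pd_t f) s t) (at s)"
    by (rule has_field_derivative_transform_within_open[of _ _ _ "{0<..}"])
       (use assms in \<open>auto simp: I1 PQ\<close>)
  from DERIV_unique[OF this dsf[OF U]] show ?thesis by simp
qed

lemma ext0:
  assumes P: "(s,t) \<in> punctured_quadrant" and c: "continuous_on U (\<lambda>p. h (fst p) (snd p))"
    and z: "\<And>u v. 0 < u \<Longrightarrow> 0 < v \<Longrightarrow> h u v = (0::real)"
  shows "h s t = 0"
proof -
  have U: "(s,t) \<in> U" using P PU by auto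
  have ic: "isCont (\<lambda>p. h (fst p) (snd p)) (s,t)"
    using c U U_open continuous_on_eq_continuous_at by blast
  define X where "X n = (s + inverse (real (Suc n)), t + inverse (real (Suc n)))" for n
  have "(\<lambda>n. s + inverse (real (Suc n))) \<longlonglongrightarrow> s + 0" "(\<lambda>n. t + inverse (real (Suc n))) \<longlonglongrightarrow> t + 0"
    by (intro tendsto_add tendsto_const LIMSEQ_inverse_real_of_nat)+
  then have "X \<longlonglongrightarrow> (s,t)" unfolding X_def by (simp add: tendsto_Pair)
  from isCont_tendsto_compose[OF ic this] have "(\<lambda>n. h (fst (X n)) (snd (X n))) \<longlonglongrightarrow> h s t" by simp
  moreover have "h (fst (X n)) (snd (X n)) = 0" for n
    using P by (auto simp: X_def PQ intro!: z add_nonneg_pos)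
  ultimately have "(\<lambda>n. 0) \<longlonglongrightarrow> h s t" by simp
  then show ?thesis using LIMSEQ_unique[OF _ tendsto_const[of 0]] by metis
qed

lemma I4: assumes "(s,t) \<in> punctured_quadrant" shows "pd_s (pd_t f) s t = pd_t (pd_s f) s t"
proof -
  have "(\<lambda>u v. pd_s (pd_t f) u v - pd_t (pd_s f) u v) s t = 0"
  proof (rule ext0[OF assms])
    show "continuous_on U (\<lambda>p. pd_s (pd_t f) (fst p) (snd p) - pd_t (pd_s f) (fst p) (snd p))"
      using ck_facts by (intro continuous_intros) auto
    fix u v :: real assume "0 < u" "0 < v"
    from I2i[OF this] I4i[OF this] have "v * pd_s (pd_t f) u v = v * pd_t (pd_s f) u v"
      by linarith
    then show "pd_s (pd_t f) u v - pd_t (pd_s f) u v = 0" using \<open>0 < v\<close> by simp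
  qed
  then show ?thesis by simp
qed

lemma I2: assumes "(s,t) \<in> punctured_quadrant" shows "s * pd_s (pd_s f) s t + t * pd_t (pd_s f) s t = 0"
proof -
  have "(\<lambda>u v. u * pd_s (pd_s f) u v + v * pd_t (pd_s f) u v) s t = 0"
  proof (rule ext0[OF assms])
    show "continuous_on U (\<lambda>p. fst p * pd_s (pd_s f) (fst p) (snd p) + snd p * pd_t (pd_s f) (fst p) (snd p))"
      using ck_facts by (intro continuous_intros) auto
  qed (use I2i in auto)
  then show ?thesis by simp
qed

lemma I3: assumes "(s,t) \<in> punctured_quadrant" shows "s * pd_t (pd_s f) s t + t * pd_t (pd_t f) s t = 0"
proof -
  have "(\<lambda>u v. u * pd_s (pd_t f) u v + v * pd_t (pd_t f) u v) s t = 0"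
  proof (rule ext0[OF assms])
    show "continuous_on U (\<lambda>p. fst p * pd_s (pd_t f) (fst p) (snd p) + snd p * pd_t (pd_t f) (fst p) (snd p))"
      using ck_facts by (intro continuous_intros) auto
  qed (use I3i in auto)
  then show ?thesis using I4[OF assms] by simp
qed

end

lemma linear_comp1: "linear (comp1 :: real^('a::finite+'b::finite) \<Rightarrow> real^'a)"
  by (rule linearI) simp_all
lemma linear_comp2: "linear (comp2 :: real^('a::finite+'b::finite) \<Rightarrow> real^'b)"
  by (rule linearI) simp_all

lemma S_deriv:
  assumes "transpose A = A"
  shows "((\<lambda>z. alpha1_sq A (z::real^('a::finite+'b::finite))) has_derivative (\<lambda>h. 2 * ((A *v comp1 z) \<bullet> comp1 h))) (at z)"
proof -
  have bl1: "bounded_linear (comp1 :: real^('a+'b) \<Rightarrow> real^'a)"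
    using linear_comp1 linear_conv_bounded_linear by blast
  have bl2: "bounded_linear (\<lambda>z::real^('a+'b). A *v comp1 z)"
    using linear_compose[OF linear_comp1 matrix_vector_mul_linear[of A]] linear_conv_bounded_linear
    by (auto simp: o_def)
  have "((\<lambda>z. comp1 z \<bullet> (A *v comp1 z)) has_derivative (\<lambda>h. comp1 z \<bullet> (A *v comp1 h) + comp1 h \<bullet> (A *v comp1 z))) (at z)"
    by (rule has_derivative_inner[OF bounded_linear_imp_has_derivative[OF bl1] bounded_linear_imp_has_derivative[OF bl2]])
  moreover have "(\<lambda>z::real^('a+'b). alpha1_sq A z) = (\<lambda>z. comp1 z \<bullet> (A *v comp1 z))" by (simp add: fun_eq_iff alpha1_sq_def)
  ultimately have "(alpha1_sq A has_derivative (\<lambda>h. comp1 z \<bullet> (A *v comp1 h) + comp1 h \<bullet> (A *v comp1 z))) (at z)" by simp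
  moreover have "(\<lambda>h::real^('a+'b). comp1 z \<bullet> (A *v comp1 h) + comp1 h \<bullet> (A *v comp1 z)) = (\<lambda>h. 2 * ((A *v comp1 z) \<bullet> comp1 h))"
  proof
    fix h
    have "comp1 z \<bullet> (A *v comp1 h) = (A *v comp1 z) \<bullet> comp1 h" by (rule sym_inner[OF assms])
    moreover have "comp1 h \<bullet> (A *v comp1 z) = (A *v comp1 z) \<bullet> comp1 h" by (rule inner_commute)
    ultimately show "comp1 z \<bullet> (A *v comp1 h) + comp1 h \<bullet> (A *v comp1 z) = 2 * ((A *v comp1 z) \<bullet> comp1 h)" by simp
  qed
  ultimately show ?thesis by simp
qed

lemma T_deriv:
  assumes "transpose B = B"
  shows "((\<lambda>z. alpha2_sq B (z::real^('a::finite+'b::finite))) has_derivative (\<lambda>h. 2 * ((B *v comp2 z) \<bullet> comp2 h))) (at z)"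
proof -
  have bl1: "bounded_linear (comp2 :: real^('a+'b) \<Rightarrow> real^'b)"
    using linear_comp2 linear_conv_bounded_linear by blast
  have bl2: "bounded_linear (\<lambda>z::real^('a+'b). B *v comp2 z)"
    using linear_compose[OF linear_comp2 matrix_vector_mul_linear[of B]] linear_conv_bounded_linear
    by (auto simp: o_def)
  have "((\<lambda>z. comp2 z \<bullet> (B *v comp2 z)) has_derivative (\<lambda>h. comp2 z \<bullet> (B *v comp2 h) + comp2 h \<bullet> (B *v comp2 z))) (at z)"
    by (rule has_derivative_inner[OF bounded_linear_imp_has_derivative[OF bl1] bounded_linear_imp_has_derivative[OF bl2]])
  moreover have "(\<lambda>z::real^('a+'b). alpha2_sq B z) = (\<lambda>z. comp2 z \<bullet> (B *v comp2 z))" by (simp add: fun_eq_iff alpha2_sq_def)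
  ultimately have "(alpha2_sq B has_derivative (\<lambda>h. comp2 z \<bullet> (B *v comp2 h) + comp2 h \<bullet> (B *v comp2 z))) (at z)" by simp
  moreover have "(\<lambda>h::real^('a+'b). comp2 z \<bullet> (B *v comp2 h) + comp2 h \<bullet> (B *v comp2 z)) = (\<lambda>h. 2 * ((B *v comp2 z) \<bullet> comp2 h))"
  proof
    fix h
    have "comp2 z \<bullet> (B *v comp2 h) = (B *v comp2 z) \<bullet> comp2 h" by (rule sym_inner[OF assms])
    moreover have "comp2 h \<bullet> (B *v comp2 z) = (B *v comp2 z) \<bullet> comp2 h" by (rule inner_commute)
    ultimately show "comp2 z \<bullet> (B *v comp2 h) + comp2 h \<bullet> (B *v comp2 z) = 2 * ((B *v comp2 z) \<bullet> comp2 h)" by simp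
  qed
  ultimately show ?thesis by simp
qed

lemma L1_deriv: "((\<lambda>z::real^('a::finite+'b::finite). 2 * ((A *v comp1 z) \<bullet> c)) has_derivative (\<lambda>h. 2 * ((A *v comp1 h) \<bullet> c))) F"
proof -
  have "linear (\<lambda>z::real^('a+'b). 2 * ((A *v comp1 z) \<bullet> c))"
    by (rule linearI) (simp_all add: matrix_vector_right_distrib inner_add_left matrix_vector_mult_scaleR)
  then show ?thesis using linear_conv_bounded_linear bounded_linear_imp_has_derivative by blast
qed

lemma L2_deriv: "((\<lambda>z::real^('a::finite+'b::finite). 2 * ((B *v comp2 z) \<bullet> c)) has_derivative (\<lambda>h. 2 * ((B *v comp2 h) \<bullet> c))) F"
proof -
  have "linear (\<lambda>z::real^('a+'b). 2 * ((B *v comp2 z) \<bullet> c))"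
    by (rule linearI) (simp_all add: matrix_vector_right_distrib inner_add_left matrix_vector_mult_scaleR)
  then show ?thesis using linear_conv_bounded_linear bounded_linear_imp_has_derivative by blast
qed

lemma comp1_axis[simp]: "comp1 (axis (Inl a) 1 :: real^('a::finite+'b::finite)) = axis a 1"
   "comp1 (axis (Inr b) 1 :: real^('a::finite+'b::finite)) = 0"
  and comp2_axis[simp]: "comp2 (axis (Inl a) 1 :: real^('a::finite+'b::finite)) = 0"
   "comp2 (axis (Inr b) 1 :: real^('a::finite+'b::finite)) = axis b 1"
  by (auto simp: comp1_def comp2_def axis_def vec_eq_iff)

lemma pad_comp[simp]: "pad1 x $ Inl a = x $ a" "pad1 x $ Inr b = 0" "pad2 y $ Inl a = 0" "pad2 y $ Inr b = y $ b"
  by (simp_all add: pad1_def pad2_def)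

lemma vax: "(M *v axis j 1) $ i = M $ i $ j" for M :: "real^'n^'m"
  by (metis cart_eq_inner_axis matrix_vector_mul_component)

lemma sym_entry: "transpose A = A \<Longrightarrow> A $ i $ j = A $ j $ i"
  by (metis transpose_def vec_lambda_beta)

locale prodsetting = hom2 f U for f U +
  fixes A :: "real^'n1^'n1" and B :: "real^'n2^'n2"
  assumes symA: "transpose A = A" and pdA: "pos_def A"
      and symB: "transpose B = B" and pdB: "pos_def B"
      and nonneg: "\<forall>s t. 0 \<le> s \<longrightarrow> 0 \<le> t \<longrightarrow> 0 \<le> f s t"
begin

abbreviation S :: "real^('n1+'n2) \<Rightarrow> real" where "S \<equiv> alpha1_sq A"
abbreviation T :: "real^('n1+'n2) \<Rightarrow> real" where "T \<equiv> alpha2_sq B"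

lemma qA_nonneg: "0 \<le> x \<bullet> (A *v x)"
  using pdA unfolding pos_def_def by (cases "x = 0") (auto intro: less_imp_le)
lemma qB_nonneg: "0 \<le> x \<bullet> (B *v x)"
  using pdB unfolding pos_def_def by (cases "x = 0") (auto intro: less_imp_le)
lemma qA_pos: "x \<noteq> 0 \<Longrightarrow> 0 < x \<bullet> (A *v x)"
  using pdA unfolding pos_def_def by auto
lemma qB_pos: "x \<noteq> 0 \<Longrightarrow> 0 < x \<bullet> (B *v x)"
  using pdB unfolding pos_def_def by auto

lemma S_nonneg: "0 \<le> S z" and T_nonneg: "0 \<le> T z"
  by (simp_all add: alpha1_sq_def alpha2_sq_def qA_nonneg qB_nonneg)

lemma S_zero: "S z = 0 \<longleftrightarrow> comp1 z = 0"
  using qA_pos[of "comp1 z"] by (cases "comp1 z = 0") (auto simp: alpha1_sq_def)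
lemma T_zero: "T z = 0 \<longleftrightarrow> comp2 z = 0"
  using qB_pos[of "comp2 z"] by (cases "comp2 z = 0") (auto simp: alpha2_sq_def)

lemma ST_P: "z \<noteq> 0 \<Longrightarrow> (S z, T z) \<in> punctured_quadrant"
  using S_nonneg[of z] T_nonneg[of z] S_zero[of z] T_zero[of z] pad_decomp[of z]
  by (auto simp: PQ pad_eq0)

lemma ST_U: "z \<noteq> 0 \<Longrightarrow> (S z, T z) \<in> U"
  using ST_P PU by auto

lemma Fsq: "(Fprod A B f z)^2 = f (S z) (T z)"
  using nonneg S_nonneg[of z] T_nonneg[of z] by (simp add: Fprod_def)

lemma Fsq_fun: "(\<lambda>z. (Fprod A B f z)^2) = (\<lambda>z. f (S z) (T z))"
  by (simp add: Fsq)

definition Psi :: "('n1+'n2) \<Rightarrow> real^('n1+'n2) \<Rightarrow> real" where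
  "Psi j z = pd_s f (S z) (T z) * (2 * ((A *v comp1 z) \<bullet> comp1 (axis j 1 :: real^('n1+'n2))))
           + pd_t f (S z) (T z) * (2 * ((B *v comp2 z) \<bullet> comp2 (axis j 1 :: real^('n1+'n2))))"

lemma pdy1: assumes "z \<noteq> 0" shows "pdy j (\<lambda>z. (Fprod A B f z)^2) z = Psi j z"
proof -
  have "((\<lambda>z. f (S z) (T z)) has_derivative (\<lambda>h. pd_s f (S z) (T z) * (2 * ((A *v comp1 z) \<bullet> comp1 h))
          + pd_t f (S z) (T z) * (2 * ((B *v comp2 z) \<bullet> comp2 h)))) (at z)"
    by (rule chain2[OF Df[OF ST_U[OF assms]] refl S_deriv[OF symA] T_deriv[OF symB]])
  then show ?thesis unfolding Fsq_fun Psi_def by (rule pdy_eq)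
qed

definition PsiD :: "('n1+'n2) \<Rightarrow> real^('n1+'n2) \<Rightarrow> real^('n1+'n2) \<Rightarrow> real" where
  "PsiD j y h =
     (pd_s f (S y) (T y) * (2 * ((A *v comp1 h) \<bullet> comp1 (axis j 1 :: real^('n1+'n2))))
       + (pd_s (pd_s f) (S y) (T y) * (2 * ((A *v comp1 y) \<bullet> comp1 h)) + pd_t (pd_s f) (S y) (T y) * (2 * ((B *v comp2 y) \<bullet> comp2 h)))
         * (2 * ((A *v comp1 y) \<bullet> comp1 (axis j 1 :: real^('n1+'n2)))))
   + (pd_t f (S y) (T y) * (2 * ((B *v comp2 h) \<bullet> comp2 (axis j 1 :: real^('n1+'n2))))
       + (pd_s (pd_t f) (S y) (T y) * (2 * ((A *v comp1 y) \<bullet> comp1 h)) + pd_t (pd_t f) (S y) (T y) * (2 * ((B *v comp2 y) \<bullet> comp2 h)))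
         * (2 * ((B *v comp2 y) \<bullet> comp2 (axis j 1 :: real^('n1+'n2)))))"

lemma Psi_D: assumes "y \<noteq> 0"
  shows "(Psi j has_derivative PsiD j y) (at y)"
proof -
  have d1: "((\<lambda>z. pd_s f (S z) (T z)) has_derivative (\<lambda>h. pd_s (pd_s f) (S y) (T y) * (2 * ((A *v comp1 y) \<bullet> comp1 h)) + pd_t (pd_s f) (S y) (T y) * (2 * ((B *v comp2 y) \<bullet> comp2 h)))) (at y)"
    by (rule chain2[OF Dfs[OF ST_U[OF assms]] refl S_deriv[OF symA] T_deriv[OF symB]])
  have d2: "((\<lambda>z. pd_t f (S z) (T z)) has_derivative (\<lambda>h. pd_s (pd_t f) (S y) (T y) * (2 * ((A *v comp1 y) \<bullet> comp1 h)) + pd_t (pd_t f) (S y) (T y) * (2 * ((B *v comp2 y) \<bullet> comp2 h)))) (at y)"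
    by (rule chain2[OF Dft[OF ST_U[OF assms]] refl S_deriv[OF symA] T_deriv[OF symB]])
  show ?thesis unfolding Psi_def PsiD_def[abs_def]
    by (rule has_derivative_add[OF has_derivative_mult[OF d1 L1_deriv] has_derivative_mult[OF d2 L2_deriv]])
qed

lemma pdy2: assumes "y \<noteq> 0"
  shows "pdy i (pdy j (\<lambda>z. (Fprod A B f z)^2)) y = PsiD j y (axis i 1)"
proof -
  have "((\<lambda>r. Psi j (y + r *\<^sub>R axis i 1)) has_real_derivative PsiD j y (axis i 1)) (at 0)"
    by (rule dirderiv[OF Psi_D[OF assms]])
  then have "((\<lambda>r. pdy j (\<lambda>z. (Fprod A B f z)^2) (y + r *\<^sub>R axis i 1)) has_real_derivative PsiD j y (axis i 1)) (at 0)"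
  proof (rule has_field_derivative_transform_within_open[of _ _ _ "ball 0 (norm y)"])
    fix r :: real assume r: "r \<in> ball 0 (norm y)"
    have "y + r *\<^sub>R axis i 1 \<noteq> 0"
    proof
      assume "y + r *\<^sub>R axis i 1 = 0"
      then have "y = - (r *\<^sub>R axis i 1)" by (simp add: eq_neg_iff_add_eq_0)
      then have "norm y = \<bar>r\<bar>" by (simp add: norm_axis_1)
      then show False using r by simp
    qed
    then show "Psi j (y + r *\<^sub>R axis i 1) = pdy j (\<lambda>z. (Fprod A B f z)^2) (y + r *\<^sub>R axis i 1)"
      by (simp add: pdy1)
  qed (use assms in auto)
  then show ?thesis unfolding pdy_def[of i] by (rule DERIV_imp_deriv)
qed

lemma gmat_G: assumes y: "y \<noteq> 0"
  shows "gmat A B f y = bdiag (pd_s f (S y) (T y) *\<^sub>R A) (pd_t f (S y) (T y) *\<^sub>R B)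
   + (2 * pd_s (pd_s f) (S y) (T y)) *\<^sub>R outer (pad1 (A *v comp1 y)) (pad1 (A *v comp1 y))
   + (2 * pd_t (pd_s f) (S y) (T y)) *\<^sub>R (outer (pad1 (A *v comp1 y)) (pad2 (B *v comp2 y)) + outer (pad2 (B *v comp2 y)) (pad1 (A *v comp1 y)))
   + (2 * pd_t (pd_t f) (S y) (T y)) *\<^sub>R outer (pad2 (B *v comp2 y)) (pad2 (B *v comp2 y))"
  (is "_ = ?R")
proof -
  have I4': "pd_s (pd_t f) (S y) (T y) = pd_t (pd_s f) (S y) (T y)" by (rule I4[OF ST_P[OF y]])
  have e: "gmat A B f y $ i $ j = ?R $ i $ j" for i j
  proof (cases i; cases j)
    fix a a' assume ij: "i = Inl a'" "j = Inl a"
    show ?thesis unfolding ij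
      by (simp add: gmat_def pdy2[OF y] PsiD_def bdiag_def outer_def inner_axis vax sym_entry[OF symA, of a a'] algebra_simps)
  next
    fix a b assume ij: "i = Inl a" "j = Inr b"
    show ?thesis unfolding ij
      by (simp add: gmat_def pdy2[OF y] PsiD_def bdiag_def outer_def inner_axis vax I4' algebra_simps)
  next
    fix a b assume ij: "i = Inr b" "j = Inl a"
    show ?thesis unfolding ij
      by (simp add: gmat_def pdy2[OF y] PsiD_def bdiag_def outer_def inner_axis vax I4' algebra_simps)
  next
    fix b b' assume ij: "i = Inr b'" "j = Inr b"
    show ?thesis unfolding ij
      by (simp add: gmat_def pdy2[OF y] PsiD_def bdiag_def outer_def inner_axis vax sym_entry[OF symB, of b b'] algebra_simps)
  qed
  then show ?thesis by (simp add: vec_eq_iff)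
qed

end

lemma pad1_scale: "pad1 (c *\<^sub>R x) = c *\<^sub>R (pad1 x :: real^('a::finite+'b::finite))"
  and pad2_scale: "pad2 (c *\<^sub>R y) = c *\<^sub>R (pad2 y :: real^('a::finite+'b::finite))"
  by (auto simp: pad1_def pad2_def vec_eq_iff split: sum.splits)

lemma pad1_0[simp]: "pad1 0 = 0" and pad2_0[simp]: "pad2 0 = 0"
  by (auto simp: pad1_def pad2_def vec_eq_iff split: sum.splits)

lemma pad1_eq0_iff[simp]: "(pad1 x :: real^('a::finite+'b::finite)) = 0 \<longleftrightarrow> x = 0"
  by (metis comp1_pad1 pad1_0)
lemma pad2_eq0_iff[simp]: "(pad2 x :: real^('a::finite+'b::finite)) = 0 \<longleftrightarrow> x = 0"
  by (metis comp2_pad2 pad2_0)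

lemma det_scaleR': "det (c *\<^sub>R (A :: real^'n^'n)) = c ^ CARD('n) * det A"
proof -
  have "c *\<^sub>R A = (c *\<^sub>R mat 1) ** A"
    using scalar_matrix_assoc[of c "mat 1 :: real^'n^'n" A] by simp
  moreover have "det (c *\<^sub>R mat 1 :: real^'n^'n) = c ^ CARD('n)"
    by (subst det_diagonal) (auto simp: mat_def)
  ultimately show ?thesis by (simp add: det_mul)
qed

lemma alg1:
  fixes t fs ft ftt V1 V2 q :: real
  assumes "0<t" "0<fs" "0<ft" "0<ft + 2 * t * ftt" "0 \<le> V1" "0 \<le> V2" "0 \<le> t * V2 - q^2" "0 < V1 \<or> 0 < V2"
  shows "0 < fs * V1 + ft * V2 + 2 * ftt * q^2"
proof (cases "q = 0")
  case True
  then show ?thesis using assms by (auto intro: add_pos_nonneg add_nonneg_pos)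
next
  case False
  have e: "t * (fs * V1 + ft * V2 + 2 * ftt * q^2) = t * fs * V1 + ft * (t * V2 - q^2) + (ft + 2 * t * ftt) * q^2"
    by (simp add: algebra_simps)
  have "0 < (ft + 2 * t * ftt) * q^2" using False assms by simp
  moreover have "0 \<le> t * fs * V1" "0 \<le> ft * (t * V2 - q^2)" using assms by simp_all
  ultimately have "0 < t * (fs * V1 + ft * V2 + 2 * ftt * q^2)" unfolding e by linarith
  then show ?thesis using assms zero_less_mult_pos by blast
qed

lemma alg2:
  fixes s t fs ft fss fst ftt V1 V2 p q :: real
  assumes st: "0<s" "0<t" and pos: "0<fs" "0<ft" "0<fs + 2 * s * fss" "0<ft + 2 * t * ftt"
    and D: "0 < (fs + 2 * s * fss) * (ft + 2 * t * ftt) - 4 * s * t * fst^2"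
    and V: "0 \<le> V1" "0 \<le> V2" "0 \<le> s * V1 - p^2" "0 \<le> t * V2 - q^2" "0 < V1 \<or> 0 < V2"
  shows "0 < fs * V1 + ft * V2 + 2 * fss * p^2 + 4 * fst * p * q + 2 * ftt * q^2"
proof (cases "p = 0 \<and> q = 0")
  case True
  then show ?thesis using pos V by (auto intro: add_pos_nonneg add_nonneg_pos)
next
  case False
  define al where "al = fs + 2 * s * fss"
  define be where "be = ft + 2 * t * ftt"
  define K where "K = t * al * p^2 + 4 * s * t * fst * p * q + s * be * q^2"
  have Kpos: "0 < K"
  proof (cases "q = 0")
    case True
    then have "p \<noteq> 0" using False by simp
    then show ?thesis using True st pos by (simp add: K_def al_def)
  next
    case q: False
    have e: "t * al * K = (t * al * p + 2 * s * t * fst * q)^2 + s * t * (al * be - 4 * s * t * fst^2) * q^2"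
      by (simp add: K_def power2_eq_square algebra_simps)
    have "0 < s * t * (al * be - 4 * s * t * fst^2) * q^2" using st D q by (simp add: al_def be_def)
    then have "0 < t * al * K" unfolding e by (metis add_nonneg_pos zero_le_power2)
    moreover have "0 < t * al" using st pos by (simp add: al_def)
    ultimately show ?thesis using zero_less_mult_pos by (metis mult.assoc)
  qed
  have e: "s * t * (fs * V1 + ft * V2 + 2 * fss * p^2 + 4 * fst * p * q + 2 * ftt * q^2) = fs * t * (s * V1 - p^2) + ft * s * (t * V2 - q^2) + K"
    by (simp add: K_def al_def be_def power2_eq_square algebra_simps)
  have "0 \<le> fs * t * (s * V1 - p^2)" "0 \<le> ft * s * (t * V2 - q^2)" using st pos V by simp_all
  then have "0 < s * t * (fs * V1 + ft * V2 + 2 * fss * p^2 + 4 * fst * p * q + 2 * ftt * q^2)" unfolding e using Kpos by linarith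
  moreover have "0 < s * t" using st by simp
  ultimately show ?thesis using zero_less_mult_pos by blast
qed

lemma (in hom2) global_fs:
  assumes "0 < s0" "0 < t" and h: "\<And>u. 0 < u \<Longrightarrow> u < s0 \<Longrightarrow> 0 < pd_s f u t + 2 * u * pd_s (pd_s f) u t"
  shows "0 < pd_s f s0 t"
proof -
  let ?h = "\<lambda>u. sqrt u * pd_s f u t"
  have "?h 0 < ?h s0"
  proof (rule DERIV_pos_imp_increasing_open[OF assms(1)])
    fix u assume u: "0 < u" "u < s0"
    have U: "(u,t) \<in> U" using u assms by (intro PinU) auto
    have "DERIV ?h u :> inverse (sqrt u) / 2 * pd_s f u t + pd_s (pd_s f) u t * sqrt u"
      by (rule DERIV_mult[OF DERIV_real_sqrt[OF u(1)] dsfs[OF U]])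
    moreover have "0 < inverse (sqrt u) / 2 * pd_s f u t + pd_s (pd_s f) u t * sqrt u"
    proof -
      have su: "0 < sqrt u" using u by simp
      have "inverse (sqrt u) / 2 * pd_s f u t + pd_s (pd_s f) u t * sqrt u
            = (pd_s f u t + 2 * u * pd_s (pd_s f) u t) / (2 * sqrt u)"
        using su u by (simp add: field_simps)
      then show ?thesis using h[OF u] su by simp
    qed
    ultimately show "\<exists>y. DERIV ?h u :> y \<and> 0 < y" by blast
  next
    have "continuous_on {0..s0} (\<lambda>u. (\<lambda>p. pd_s f (fst p) (snd p)) ((\<lambda>u. (u, t)) u))"
      by (rule continuous_on_compose2[OF ck_facts(3)]) (use assms in \<open>auto intro!: continuous_intros PinU\<close>)
    then have "continuous_on {0..s0} (\<lambda>u. pd_s f u t)" by simp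
    then show "continuous_on {0..s0} ?h" by (intro continuous_intros)
  qed
  then have "0 < sqrt s0 * pd_s f s0 t" by simp
  then show ?thesis using assms zero_less_mult_pos by (metis real_sqrt_gt_0_iff)
qed

lemma (in hom2) global_ft:
  assumes "0 < t0" "0 < s" and h: "\<And>u. 0 < u \<Longrightarrow> u < t0 \<Longrightarrow> 0 < pd_t f s u + 2 * u * pd_t (pd_t f) s u"
  shows "0 < pd_t f s t0"
proof -
  let ?h = "\<lambda>u. sqrt u * pd_t f s u"
  have "?h 0 < ?h t0"
  proof (rule DERIV_pos_imp_increasing_open[OF assms(1)])
    fix u assume u: "0 < u" "u < t0"
    have U: "(s,u) \<in> U" using u assms by (intro PinU) auto
    have "DERIV ?h u :> inverse (sqrt u) / 2 * pd_t f s u + pd_t (pd_t f) s u * sqrt u"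
      by (rule DERIV_mult[OF DERIV_real_sqrt[OF u(1)] dtft[OF U]])
    moreover have "0 < inverse (sqrt u) / 2 * pd_t f s u + pd_t (pd_t f) s u * sqrt u"
    proof -
      have su: "0 < sqrt u" using u by simp
      have "inverse (sqrt u) / 2 * pd_t f s u + pd_t (pd_t f) s u * sqrt u
            = (pd_t f s u + 2 * u * pd_t (pd_t f) s u) / (2 * sqrt u)"
        using su u by (simp add: field_simps)
      then show ?thesis using h[OF u] su by simp
    qed
    ultimately show "\<exists>y. DERIV ?h u :> y \<and> 0 < y" by blast
  next
    have "continuous_on {0..t0} (\<lambda>u. (\<lambda>p. pd_t f (fst p) (snd p)) ((\<lambda>u. (s, u)) u))"
      by (rule continuous_on_compose2[OF ck_facts(5)]) (use assms in \<open>auto intro!: continuous_intros PinU\<close>)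
    then have "continuous_on {0..t0} (\<lambda>u. pd_t f s u)" by simp
    then show "continuous_on {0..t0} ?h" by (intro continuous_intros)
  qed
  then have "0 < sqrt t0 * pd_t f s t0" by simp
  then show ?thesis using assms zero_less_mult_pos by (metis real_sqrt_gt_0_iff)
qed

context prodsetting
begin

lemma quad:
  assumes y: "y \<noteq> 0"
  shows "v \<bullet> (gmat A B f y *v v) =
     pd_s f (S y) (T y) * (comp1 v \<bullet> (A *v comp1 v)) + pd_t f (S y) (T y) * (comp2 v \<bullet> (B *v comp2 v))
     + 2 * pd_s (pd_s f) (S y) (T y) * ((A *v comp1 y) \<bullet> comp1 v)^2
     + 4 * pd_t (pd_s f) (S y) (T y) * ((A *v comp1 y) \<bullet> comp1 v) * ((B *v comp2 y) \<bullet> comp2 v)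
     + 2 * pd_t (pd_t f) (S y) (T y) * ((B *v comp2 y) \<bullet> comp2 v)^2"
  unfolding gmat_G[OF y]
  by (simp add: matrix_vector_mult_add_rdistrib scaleR_matrix_vector_assoc[symmetric] outer_mv bdiag_mv
        inner_add_right matrix_vector_mult_scaleR inner_commute[of "comp1 v"] inner_commute[of "comp2 v"]
        power2_eq_square algebra_simps)

lemma detg:
  assumes y: "y \<noteq> 0"
    and fs0: "pd_s f (S y) (T y) \<noteq> 0" and ft0: "pd_t f (S y) (T y) \<noteq> 0"
    and c0: "pd_s f (S y) (T y) + 2 * S y * pd_s (pd_s f) (S y) (T y) \<noteq> 0"
  shows "det (gmat A B f y) =
     (pd_s f (S y) (T y) ^ (CARD('n1) - 1) * pd_t f (S y) (T y) ^ (CARD('n2) - 1) *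
      (pd_s f (S y) (T y) * pd_t f (S y) (T y) - 2 * f (S y) (T y) * pd_t (pd_s f) (S y) (T y)))
     * det A * det B"
proof -
  define s where "s = S y"
  define t where "t = T y"
  define fs where "fs = pd_s f s t"
  define ft where "ft = pd_t f s t"
  define fss where "fss = pd_s (pd_s f) s t"
  define fst' where "fst' = pd_t (pd_s f) s t"
  define ftt where "ftt = pd_t (pd_t f) s t"
  define a :: "real^('n1+'n2)" where "a = pad1 (A *v comp1 y)"
  define b :: "real^('n1+'n2)" where "b = pad2 (B *v comp2 y)"
  define x :: "real^('n1+'n2)" where "x = pad1 (comp1 y)"
  define z :: "real^('n1+'n2)" where "z = pad2 (comp2 y)"
  define u where "u = (2 * fss / fs) *\<^sub>R a + (2 * fst' / fs) *\<^sub>R b"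
  define w where "w = (2 * fst' / ft) *\<^sub>R a + (2 * ftt / ft) *\<^sub>R b"
  define M0 where "M0 = bdiag (fs *\<^sub>R A) (ft *\<^sub>R B)"
  have fs0': "fs \<noteq> 0" and ft0': "ft \<noteq> 0" using fs0 ft0 by (simp_all add: fs_def ft_def s_def t_def)
  have P: "(s,t) \<in> punctured_quadrant" using ST_P[OF y] by (simp add: s_def t_def)
  have id1: "f s t = s * fs + t * ft" using I1[OF P] by (simp add: fs_def ft_def)
  have id2: "s * fss + t * fst' = 0" using I2[OF P] by (simp add: fss_def fst'_def)
  have id3: "s * fst' + t * ftt = 0" using I3[OF P] by (simp add: ftt_def fst'_def)
  have G: "gmat A B f y = M0 + (2 * fss) *\<^sub>R outer a a + (2 * fst') *\<^sub>R (outer a b + outer b a) + (2 * ftt) *\<^sub>R outer b b"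
    using gmat_G[OF y] by (simp add: M0_def fs_def ft_def fss_def fst'_def ftt_def a_def b_def s_def t_def)
  have M0x: "M0 *v x = fs *\<^sub>R a" and M0z: "M0 *v z = ft *\<^sub>R b"
    by (simp_all add: M0_def x_def z_def a_def b_def bdiag_mv scaleR_matrix_vector_assoc[symmetric] pad1_scale pad2_scale)
  have "M0 ** (mat 1 + outer x u + outer z w) = M0 + outer (fs *\<^sub>R a) u + outer (ft *\<^sub>R b) w"
    by (simp add: matrix_add_ldistrib mat_outer M0x M0z)
  also have "\<dots> = gmat A B f y"
    unfolding G u_def w_def using fs0' ft0'
    by (simp add: outer_scale_left outer_scale_right outer_add_right scaleR_add_right algebra_simps)
  finally have Gf: "gmat A B f y = M0 ** (mat 1 + outer x u + outer z w)" by simp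
  have ax: "a \<bullet> x = s" and bx: "b \<bullet> x = 0" and az: "a \<bullet> z = 0" and bz: "b \<bullet> z = t"
    by (simp_all add: a_def b_def x_def z_def s_def t_def alpha1_sq_def alpha2_sq_def inner_commute)
  have ux: "u \<bullet> x = 2 * fss * s / fs" and uz: "u \<bullet> z = 2 * fst' * t / fs"
   and wx: "w \<bullet> x = 2 * fst' * s / ft" and wz: "w \<bullet> z = 2 * ftt * t / ft"
    by (simp_all add: u_def w_def inner_add_left ax bx az bz)
  have c: "1 + u \<bullet> x \<noteq> 0"
    using c0 fs0' by (simp add: ux s_def fs_def fss_def t_def field_simps)
  have dM0: "det M0 = fs ^ CARD('n1) * det A * (ft ^ CARD('n2) * det B)"
    by (simp add: M0_def det_bdiag det_scaleR')
  have n1: "CARD('n1) = Suc (CARD('n1) - 1)" and n2: "CARD('n2) = Suc (CARD('n2) - 1)"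
    by (simp_all add: Suc_diff_1 finite_UNIV_card_ge_0)
  have key: "fs * ft * ((1 + 2 * fss * s / fs) * (1 + 2 * ftt * t / ft) - (2 * fst' * t / fs) * (2 * fst' * s / ft))
          = fs * ft - 2 * f s t * fst'"
  proof -
    have "fs * ft * ((1 + 2 * fss * s / fs) * (1 + 2 * ftt * t / ft) - (2 * fst' * t / fs) * (2 * fst' * s / ft))
        = (fs + 2 * s * fss) * (ft + 2 * t * ftt) - 4 * s * t * fst' * fst'"
      using fs0' ft0' by (simp add: field_simps)
    also have "\<dots> = fs * ft + 2 * ft * (s * fss) + 2 * fs * (t * ftt) + 4 * (s * fss) * (t * ftt) - 4 * s * t * fst' * fst'"
      by (simp add: algebra_simps)
    also have "s * fss = - (t * fst')" using id2 by simp
    also have "t * ftt = - (s * fst')" using id3 by simp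
    finally show ?thesis unfolding id1 by (simp add: algebra_simps)
  qed
  have "det (gmat A B f y) = det M0 * ((1 + u \<bullet> x) * (1 + w \<bullet> z) - (u \<bullet> z) * (w \<bullet> x))"
    unfolding Gf det_mul det_rank2[OF c] ..
  also have "\<dots> = fs ^ (CARD('n1) - 1) * ft ^ (CARD('n2) - 1) * det A * det B *
      (fs * ft * ((1 + 2 * fss * s / fs) * (1 + 2 * ftt * t / ft) - (2 * fst' * t / fs) * (2 * fst' * s / ft)))"
  proof -
    have p1: "fs ^ CARD('n1) = fs * fs ^ (CARD('n1) - 1)" using n1 by (metis power_Suc)
    have p2: "ft ^ CARD('n2) = ft * ft ^ (CARD('n2) - 1)" using n2 by (metis power_Suc)
    show ?thesis unfolding dM0 ux uz wx wz p1 p2 by (simp only: mult_ac)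
  qed
  also have "\<dots> = (fs ^ (CARD('n1) - 1) * ft ^ (CARD('n2) - 1) * (fs * ft - 2 * f s t * fst')) * det A * det B"
    unfolding key by (simp add: mult_ac)
  finally show ?thesis by (simp add: fs_def ft_def fst'_def s_def t_def)
qed

lemma S_pad: "S (pad1 p + pad2 q) = p \<bullet> (A *v p)" and T_pad: "T (pad1 p + pad2 q) = q \<bullet> (B *v q)"
  by (simp_all add: alpha1_sq_def alpha2_sq_def)

lemma quad_special:
  assumes y: "y \<noteq> 0"
  shows "(pad1 (\<alpha> *\<^sub>R comp1 y) + pad2 (\<beta> *\<^sub>R comp2 y)) \<bullet> (gmat A B f y *v (pad1 (\<alpha> *\<^sub>R comp1 y) + pad2 (\<beta> *\<^sub>R comp2 y))) =
     pd_s f (S y) (T y) * \<alpha>^2 * S y + pd_t f (S y) (T y) * \<beta>^2 * T y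
     + 2 * pd_s (pd_s f) (S y) (T y) * \<alpha>^2 * (S y)^2
     + 4 * pd_t (pd_s f) (S y) (T y) * \<alpha> * \<beta> * S y * T y
     + 2 * pd_t (pd_t f) (S y) (T y) * \<beta>^2 * (T y)^2"
proof -
  have e1: "(A *v comp1 y) \<bullet> comp1 y = S y" by (simp add: alpha1_sq_def inner_commute)
  have e2: "(B *v comp2 y) \<bullet> comp2 y = T y" by (simp add: alpha2_sq_def inner_commute)
  show ?thesis unfolding quad[OF y]
    by (simp add: matrix_vector_mult_scaleR e1 e2 alpha1_sq_def[symmetric] alpha2_sq_def[symmetric] power2_eq_square algebra_simps)
qed

lemma CS: "(x \<bullet> (A *v x)) * (w \<bullet> (A *v w)) - ((A *v x) \<bullet> w)^2 \<ge> 0"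
proof (cases "x = 0")
  case True then show ?thesis by simp
next
  case False
  define \<sigma> where "\<sigma> = x \<bullet> (A *v x)"
  define p where "p = (A *v x) \<bullet> w"
  have sp: "0 < \<sigma>" using qA_pos[OF False] by (simp add: \<sigma>_def)
  define d where "d = w - (p / \<sigma>) *\<^sub>R x"
  have e1: "w \<bullet> (A *v x) = p" by (simp add: p_def inner_commute)
  have e2: "x \<bullet> (A *v w) = p" by (simp add: p_def sym_inner[OF symA])
  have "d \<bullet> (A *v d) = w \<bullet> (A *v w) - (p / \<sigma>) * (w \<bullet> (A *v x)) - (p / \<sigma>) * (x \<bullet> (A *v w)) + (p / \<sigma>) * (p / \<sigma>) * \<sigma>"
    by (simp add: d_def matrix_vector_mult_diff_distrib matrix_vector_mult_scaleR inner_diff_left inner_diff_right \<sigma>_def algebra_simps)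
  also have "\<dots> = w \<bullet> (A *v w) - p^2 / \<sigma>"
    unfolding e1 e2 using sp by (simp add: field_simps power2_eq_square)
  finally have "0 \<le> w \<bullet> (A *v w) - p^2 / \<sigma>" using qA_nonneg[of d] by simp
  then have "0 \<le> \<sigma> * (w \<bullet> (A *v w) - p^2 / \<sigma>)" using sp by simp
  then show ?thesis using sp by (simp add: \<sigma>_def[symmetric] p_def[symmetric] field_simps)
qed

lemma CSB: "(x \<bullet> (B *v x)) * (w \<bullet> (B *v w)) - ((B *v x) \<bullet> w)^2 \<ge> 0"
proof (cases "x = 0")
  case True then show ?thesis by simp
next
  case False
  define \<sigma> where "\<sigma> = x \<bullet> (B *v x)"
  define p where "p = (B *v x) \<bullet> w"
  have sp: "0 < \<sigma>" using qB_pos[OF False] by (simp add: \<sigma>_def)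
  define d where "d = w - (p / \<sigma>) *\<^sub>R x"
  have e1: "w \<bullet> (B *v x) = p" by (simp add: p_def inner_commute)
  have e2: "x \<bullet> (B *v w) = p" by (simp add: p_def sym_inner[OF symB])
  have "d \<bullet> (B *v d) = w \<bullet> (B *v w) - (p / \<sigma>) * (w \<bullet> (B *v x)) - (p / \<sigma>) * (x \<bullet> (B *v w)) + (p / \<sigma>) * (p / \<sigma>) * \<sigma>"
    by (simp add: d_def matrix_vector_mult_diff_distrib matrix_vector_mult_scaleR inner_diff_left inner_diff_right \<sigma>_def algebra_simps)
  also have "\<dots> = w \<bullet> (B *v w) - p^2 / \<sigma>"
    unfolding e1 e2 using sp by (simp add: field_simps power2_eq_square)
  finally have "0 \<le> w \<bullet> (B *v w) - p^2 / \<sigma>" using qB_nonneg[of d] by simp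
  then have "0 \<le> \<sigma> * (w \<bullet> (B *v w) - p^2 / \<sigma>)" using sp by simp
  then show ?thesis using sp by (simp add: \<sigma>_def[symmetric] p_def[symmetric] field_simps)
qed

lemma keyid: assumes P: "(s,t) \<in> punctured_quadrant"
  shows "(pd_s f s t + 2 * s * pd_s (pd_s f) s t) * (pd_t f s t + 2 * t * pd_t (pd_t f) s t) - 4 * s * t * (pd_t (pd_s f) s t)^2
         = pd_s f s t * pd_t f s t - 2 * f s t * pd_t (pd_s f) s t"
proof -
  have id2: "s * pd_s (pd_s f) s t = - (t * pd_t (pd_s f) s t)" using I2[OF P] by simp
  have id3: "t * pd_t (pd_t f) s t = - (s * pd_t (pd_s f) s t)" using I3[OF P] by simp
  have "(pd_s f s t + 2 * s * pd_s (pd_s f) s t) * (pd_t f s t + 2 * t * pd_t (pd_t f) s t) - 4 * s * t * (pd_t (pd_s f) s t)^2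
     = pd_s f s t * pd_t f s t + 2 * pd_t f s t * (s * pd_s (pd_s f) s t) + 2 * pd_s f s t * (t * pd_t (pd_t f) s t)
       + 4 * (s * pd_s (pd_s f) s t) * (t * pd_t (pd_t f) s t) - 4 * s * t * (pd_t (pd_s f) s t)^2"
    by (simp add: algebra_simps power2_eq_square)
  also have "\<dots> = pd_s f s t * pd_t f s t - 2 * (s * pd_s f s t + t * pd_t f s t) * pd_t (pd_s f) s t"
    unfolding id2 id3 by (simp add: algebra_simps power2_eq_square)
  finally show ?thesis using I1[OF P] by simp
qed

lemma L1: assumes y: "y \<noteq> 0" and pd: "pos_def (gmat A B f y)" and s: "0 < S y"
  shows "0 < pd_s f (S y) (T y) + 2 * S y * pd_s (pd_s f) (S y) (T y)"
proof -
  have "comp1 y \<noteq> 0" using s S_zero[of y] by auto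
  then have "pad1 (1 *\<^sub>R comp1 y) + pad2 (0 *\<^sub>R comp2 y) \<noteq> (0::real^('n1+'n2))" by (simp add: pad_eq0)
  with pd have "0 < pd_s f (S y) (T y) * 1^2 * S y + pd_t f (S y) (T y) * 0^2 * T y
     + 2 * pd_s (pd_s f) (S y) (T y) * 1^2 * (S y)^2
     + 4 * pd_t (pd_s f) (S y) (T y) * 1 * 0 * S y * T y
     + 2 * pd_t (pd_t f) (S y) (T y) * 0^2 * (T y)^2"
    unfolding quad_special[OF y, symmetric] pos_def_def by blast
  then have "0 < S y * (pd_s f (S y) (T y) + 2 * S y * pd_s (pd_s f) (S y) (T y))"
    by (simp add: power2_eq_square algebra_simps)
  then show ?thesis using s zero_less_mult_pos by blast
qed

lemma L3: assumes y: "y \<noteq> 0" and pd: "pos_def (gmat A B f y)" and t: "0 < T y"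
  shows "0 < pd_t f (S y) (T y) + 2 * T y * pd_t (pd_t f) (S y) (T y)"
proof -
  have "comp2 y \<noteq> 0" using t T_zero[of y] by auto
  then have "pad1 (0 *\<^sub>R comp1 y) + pad2 (1 *\<^sub>R comp2 y) \<noteq> (0::real^('n1+'n2))" by (simp add: pad_eq0)
  with pd have "0 < pd_s f (S y) (T y) * 0^2 * S y + pd_t f (S y) (T y) * 1^2 * T y
     + 2 * pd_s (pd_s f) (S y) (T y) * 0^2 * (S y)^2
     + 4 * pd_t (pd_s f) (S y) (T y) * 0 * 1 * S y * T y
     + 2 * pd_t (pd_t f) (S y) (T y) * 1^2 * (T y)^2"
    unfolding quad_special[OF y, symmetric] pos_def_def by blast
  then have "0 < T y * (pd_t f (S y) (T y) + 2 * T y * pd_t (pd_t f) (S y) (T y))"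
    by (simp add: power2_eq_square algebra_simps)
  then show ?thesis using t zero_less_mult_pos by blast
qed

lemma L2: assumes y: "y \<noteq> 0" and pd: "pos_def (gmat A B f y)" and s: "S y = 0"
  shows "0 < pd_s f (S y) (T y)"
proof -
  have y1: "comp1 y = 0" using s S_zero by auto
  define e :: "real^'n1" where "e = axis undefined 1"
  have e0: "e \<noteq> 0" by (simp add: e_def axis_eq_0_iff)
  have "pad1 e \<noteq> (0::real^('n1+'n2))" using e0 pad_eq0[of e 0] by simp
  with pd have "0 < pad1 e \<bullet> (gmat A B f y *v pad1 e)" unfolding pos_def_def by blast
  also have "\<dots> = pd_s f (S y) (T y) * (e \<bullet> (A *v e))"
    unfolding quad[OF y] by (simp add: y1)
  finally show ?thesis using qA_pos[OF e0] zero_less_mult_pos2 by blast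
qed

lemma L4: assumes y: "y \<noteq> 0" and pd: "pos_def (gmat A B f y)" and t: "T y = 0"
  shows "0 < pd_t f (S y) (T y)"
proof -
  have y2: "comp2 y = 0" using t T_zero by auto
  define e :: "real^'n2" where "e = axis undefined 1"
  have e0: "e \<noteq> 0" by (simp add: e_def axis_eq_0_iff)
  have "pad2 e \<noteq> (0::real^('n1+'n2))" using e0 pad_eq0[of 0 e] by simp
  with pd have "0 < pad2 e \<bullet> (gmat A B f y *v pad2 e)" unfolding pos_def_def by blast
  also have "\<dots> = pd_t f (S y) (T y) * (e \<bullet> (B *v e))"
    unfolding quad[OF y] by (simp add: y2)
  finally show ?thesis using qB_pos[OF e0] zero_less_mult_pos2 by blast
qed

lemma L5: assumes y: "y \<noteq> 0" and pd: "pos_def (gmat A B f y)" and s: "0 < S y" and t: "0 < T y"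
  shows "0 < pd_s f (S y) (T y) * pd_t f (S y) (T y) - 2 * f (S y) (T y) * pd_t (pd_s f) (S y) (T y)"
proof -
  define X where "X = S y * (pd_s f (S y) (T y) + 2 * S y * pd_s (pd_s f) (S y) (T y))"
  define Y where "Y = T y * (pd_t f (S y) (T y) + 2 * T y * pd_t (pd_t f) (S y) (T y))"
  define Z where "Z = 2 * pd_t (pd_s f) (S y) (T y) * S y * T y"
  have X: "0 < X" using L1[OF y pd s] s by (simp add: X_def)
  have "comp2 y \<noteq> 0" using t T_zero[of y] by auto
  then have "pad1 ((- Z) *\<^sub>R comp1 y) + pad2 (X *\<^sub>R comp2 y) \<noteq> (0::real^('n1+'n2))" using X by (simp add: pad_eq0)
  with pd have "0 < pd_s f (S y) (T y) * (- Z)^2 * S y + pd_t f (S y) (T y) * X^2 * T y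
     + 2 * pd_s (pd_s f) (S y) (T y) * (- Z)^2 * (S y)^2
     + 4 * pd_t (pd_s f) (S y) (T y) * (- Z) * X * S y * T y
     + 2 * pd_t (pd_t f) (S y) (T y) * X^2 * (T y)^2"
    unfolding quad_special[OF y, symmetric] pos_def_def by blast
  also have "\<dots> = X * (X * Y - Z^2)"
    by (simp add: X_def Y_def Z_def power2_eq_square algebra_simps)
  finally have "0 < X * Y - Z^2" using X zero_less_mult_pos by blast
  also have "X * Y - Z^2 = (S y * T y) * ((pd_s f (S y) (T y) + 2 * S y * pd_s (pd_s f) (S y) (T y)) * (pd_t f (S y) (T y) + 2 * T y * pd_t (pd_t f) (S y) (T y)) - 4 * S y * T y * (pd_t (pd_s f) (S y) (T y))^2)"
    by (simp add: X_def Y_def Z_def power2_eq_square algebra_simps)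
  also have "\<dots> = (S y * T y) * (pd_s f (S y) (T y) * pd_t f (S y) (T y) - 2 * f (S y) (T y) * pd_t (pd_s f) (S y) (T y))"
    by (simp add: keyid[OF ST_P[OF y]])
  finally show ?thesis using s t zero_less_mult_pos by (metis mult_pos_pos)
qed

lemma fwd:
  assumes H: "\<forall>y. y \<noteq> 0 \<longrightarrow> pos_def (gmat A B f y)" and y: "y \<noteq> 0"
  shows "pd_s f (S y) (T y) > 0 \<and> pd_t f (S y) (T y) > 0 \<and>
         pd_s f (S y) (T y) + 2 * S y * pd_s (pd_s f) (S y) (T y) > 0 \<and>
         pd_t f (S y) (T y) + 2 * T y * pd_t (pd_t f) (S y) (T y) > 0 \<and>
         pd_s f (S y) (T y) * pd_t f (S y) (T y) - 2 * f (S y) (T y) * pd_t (pd_s f) (S y) (T y) > 0"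
proof -
  have pd: "pos_def (gmat A B f y)" using H y by blast
  have P: "(S y, T y) \<in> punctured_quadrant" by (rule ST_P[OF y])
  consider (a) "0 < S y" "0 < T y" | (b) "S y = 0" "0 < T y" | (c) "0 < S y" "T y = 0"
  proof -
    have h: "0 \<le> S y" "0 \<le> T y" "S y \<noteq> 0 \<or> T y \<noteq> 0" using P by (auto simp: PQ)
    assume r: "0 < S y \<Longrightarrow> 0 < T y \<Longrightarrow> thesis" "S y = 0 \<Longrightarrow> 0 < T y \<Longrightarrow> thesis" "0 < S y \<Longrightarrow> T y = 0 \<Longrightarrow> thesis"
    show thesis
    proof (cases "S y = 0")
      case True then show ?thesis using h r by auto
    next
      case False
      then have "0 < S y" using h by auto
      then show ?thesis using h r by (cases "T y = 0") auto
    qed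
  qed
  then show ?thesis
  proof cases
    case a
    have y1: "comp1 y \<noteq> 0" and y2: "comp2 y \<noteq> 0" using a S_zero[of y] T_zero[of y] by auto
    have C1: "0 < pd_s f (S y) (T y)"
    proof (rule global_fs[OF a])
      fix u :: real assume u: "0 < u" "u < S y"
      define y' where "y' = pad1 (sqrt (u / S y) *\<^sub>R comp1 y) + pad2 (1 *\<^sub>R comp2 y)"
      have y'0: "y' \<noteq> 0" using y2 by (simp add: y'_def pad_eq0)
      have "S y' = sqrt (u / S y) * (sqrt (u / S y) * S y)"
        by (simp add: y'_def S_pad matrix_vector_mult_scaleR alpha1_sq_def[symmetric])
      also have "\<dots> = (sqrt (u / S y))^2 * S y" by (simp only: power2_eq_square mult.assoc)
      also have "\<dots> = u" using a u by simp
      finally have Sy': "S y' = u" .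
      have Ty': "T y' = T y" by (simp add: y'_def T_pad alpha2_sq_def[symmetric])
      show "0 < pd_s f u (T y) + 2 * u * pd_s (pd_s f) u (T y)"
        using L1[OF y'0 _] H y'0 u unfolding Sy' Ty' by auto
    qed
    have C2: "0 < pd_t f (S y) (T y)"
    proof (rule global_ft[OF a(2,1)])
      fix u :: real assume u: "0 < u" "u < T y"
      define y' where "y' = pad1 (1 *\<^sub>R comp1 y) + pad2 (sqrt (u / T y) *\<^sub>R comp2 y)"
      have y'0: "y' \<noteq> 0" using y1 by (simp add: y'_def pad_eq0)
      have "T y' = sqrt (u / T y) * (sqrt (u / T y) * T y)"
        by (simp add: y'_def T_pad matrix_vector_mult_scaleR alpha2_sq_def[symmetric])
      also have "\<dots> = (sqrt (u / T y))^2 * T y" by (simp only: power2_eq_square mult.assoc)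
      also have "\<dots> = u" using a u by simp
      finally have Ty': "T y' = u" .
      have Sy': "S y' = S y" by (simp add: y'_def S_pad alpha1_sq_def[symmetric])
      show "0 < pd_t f (S y) u + 2 * u * pd_t (pd_t f) (S y) u"
        using L3[OF y'0 _] H y'0 u unfolding Sy' Ty' by auto
    qed
    show ?thesis using C1 C2 L1[OF y pd a(1)] L3[OF y pd a(2)] L5[OF y pd a] by simp
  next
    case b
    have C1: "0 < pd_s f (S y) (T y)" by (rule L2[OF y pd b(1)])
    have "T y * pd_t (pd_s f) (S y) (T y) = 0" using I2[OF P] b by simp
    then have fst0: "pd_t (pd_s f) (S y) (T y) = 0" using b by simp
    have "T y * pd_t (pd_t f) (S y) (T y) = 0" using I3[OF P] b by simp
    then have ftt0: "pd_t (pd_t f) (S y) (T y) = 0" using b by simp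
    have C2: "0 < pd_t f (S y) (T y)" using L3[OF y pd b(2)] ftt0 by simp
    show ?thesis using C1 C2 b fst0 ftt0 by simp
  next
    case c
    have C2: "0 < pd_t f (S y) (T y)" by (rule L4[OF y pd c(2)])
    have "S y * pd_s (pd_s f) (S y) (T y) = 0" using I2[OF P] c by simp
    then have fss0: "pd_s (pd_s f) (S y) (T y) = 0" using c by simp
    have "S y * pd_t (pd_s f) (S y) (T y) = 0" using I3[OF P] c by simp
    then have fst0: "pd_t (pd_s f) (S y) (T y) = 0" using c by simp
    have C1: "0 < pd_s f (S y) (T y)" using L1[OF y pd c(1)] fss0 by simp
    show ?thesis using C1 C2 c fst0 fss0 by simp
  qed
qed

lemma bwd:
  assumes y: "y \<noteq> 0"
    and C: "pd_s f (S y) (T y) > 0 \<and> pd_t f (S y) (T y) > 0 \<and>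
         pd_s f (S y) (T y) + 2 * S y * pd_s (pd_s f) (S y) (T y) > 0 \<and>
         pd_t f (S y) (T y) + 2 * T y * pd_t (pd_t f) (S y) (T y) > 0 \<and>
         pd_s f (S y) (T y) * pd_t f (S y) (T y) - 2 * f (S y) (T y) * pd_t (pd_s f) (S y) (T y) > 0"
  shows "pos_def (gmat A B f y)"
  unfolding pos_def_def
proof (intro allI impI)
  fix v :: "real^('n1+'n2)" assume v: "v \<noteq> 0"
  have P: "(S y, T y) \<in> punctured_quadrant" by (rule ST_P[OF y])
  define V1 where "V1 = comp1 v \<bullet> (A *v comp1 v)"
  define V2 where "V2 = comp2 v \<bullet> (B *v comp2 v)"
  define p where "p = (A *v comp1 y) \<bullet> comp1 v"
  define q where "q = (B *v comp2 y) \<bullet> comp2 v"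
  have V: "0 \<le> V1" "0 \<le> V2" using qA_nonneg qB_nonneg by (simp_all add: V1_def V2_def)
  have V12: "0 < V1 \<or> 0 < V2"
  proof -
    have "comp1 v \<noteq> 0 \<or> comp2 v \<noteq> 0" using v pad_decomp[of v] by (auto simp: pad_eq0)
    then show ?thesis using qA_pos qB_pos by (auto simp: V1_def V2_def)
  qed
  have R1: "0 \<le> S y * V1 - p^2" using CS[of "comp1 y" "comp1 v"] by (simp add: alpha1_sq_def V1_def p_def)
  have R2: "0 \<le> T y * V2 - q^2" using CSB[of "comp2 y" "comp2 v"] by (simp add: alpha2_sq_def V2_def q_def)
  have Q: "v \<bullet> (gmat A B f y *v v) = pd_s f (S y) (T y) * V1 + pd_t f (S y) (T y) * V2
     + 2 * pd_s (pd_s f) (S y) (T y) * p^2 + 4 * pd_t (pd_s f) (S y) (T y) * p * q + 2 * pd_t (pd_t f) (S y) (T y) * q^2"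
    unfolding quad[OF y] V1_def V2_def p_def q_def ..
  consider (a) "0 < S y" "0 < T y" | (b) "S y = 0" "0 < T y" | (c) "0 < S y" "T y = 0"
  proof -
    have h: "0 \<le> S y" "0 \<le> T y" "S y \<noteq> 0 \<or> T y \<noteq> 0" using P by (auto simp: PQ)
    assume r: "0 < S y \<Longrightarrow> 0 < T y \<Longrightarrow> thesis" "S y = 0 \<Longrightarrow> 0 < T y \<Longrightarrow> thesis" "0 < S y \<Longrightarrow> T y = 0 \<Longrightarrow> thesis"
    show thesis
    proof (cases "S y = 0")
      case True then show ?thesis using h r by auto
    next
      case False
      then have "0 < S y" using h by auto
      then show ?thesis using h r by (cases "T y = 0") auto
    qed
  qed
  then show "0 < v \<bullet> (gmat A B f y *v v)"
  proof cases
    case a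
    show ?thesis unfolding Q
      by (rule alg2[OF a _ _ _ _ _ V R1 R2 V12]) (use C keyid[OF P] in auto)
  next
    case b
    then have "p = 0" using S_zero[of y] by (simp add: p_def)
    then show ?thesis unfolding Q using alg1[OF b(2) _ _ _ V R2 V12] C by simp
  next
    case c
    then have "q = 0" using T_zero[of y] by (simp add: q_def)
    then show ?thesis unfolding Q using alg1[of "S y" "pd_t f (S y) (T y)" "pd_s f (S y) (T y)" "pd_s (pd_s f) (S y) (T y)" V2 V1 p, OF c(1) _ _ _ V(2,1) R1 V12[THEN disj_commute[THEN iffD1]]] C
      by (simp add: add_ac)
  qed
qed

end

theorem mainTheorem7:
  fixes A :: "real^'n1^'n1" and B :: "real^'n2^'n2" and f :: "real \<Rightarrow> real \<Rightarrow> real"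
  assumes symA: "transpose A = A" and pdA: "pos_def A"
      and symB: "transpose B = B" and pdB: "pos_def B"
      and smooth: "\<exists>U. open U \<and> punctured_quadrant \<subseteq> U \<and> smooth_on2 U f"
      and nonneg: "\<forall>s t. 0 \<le> s \<longrightarrow> 0 \<le> t \<longrightarrow> 0 \<le> f s t"
      and homog: "\<forall>l s t. 0 < l \<longrightarrow> 0 \<le> s \<longrightarrow> 0 \<le> t \<longrightarrow> f (l * s) (l * t) = l * f s t"
      and nonzero: "\<forall>s t. (s, t) \<in> punctured_quadrant \<longrightarrow> f s t \<noteq> 0"
  shows "((\<forall>y::real^('n1 + 'n2). y \<noteq> 0 \<longrightarrow> pos_def (gmat A B f y)) \<longleftrightarrow>
          (\<forall>y::real^('n1 + 'n2). y \<noteq> 0 \<longrightarrow>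
             (let s = alpha1_sq A y; t = alpha2_sq B y in
                pd_s f s t > 0 \<and> pd_t f s t > 0 \<and>
                pd_s f s t + 2 * s * pd_s (pd_s f) s t > 0 \<and>
                pd_t f s t + 2 * t * pd_t (pd_t f) s t > 0 \<and>
                pd_s f s t * pd_t f s t - 2 * f s t * pd_t (pd_s f) s t > 0)))
       \<and> ((\<forall>y::real^('n1 + 'n2). y \<noteq> 0 \<longrightarrow> pos_def (gmat A B f y)) \<longrightarrow>
          (\<forall>y::real^('n1 + 'n2). y \<noteq> 0 \<longrightarrow>
             (let s = alpha1_sq A y; t = alpha2_sq B y in
                det (gmat A B f y) =
                  (pd_s f s t ^ (CARD('n1) - 1) * pd_t f s t ^ (CARD('n2) - 1) *
                   (pd_s f s t * pd_t f s t - 2 * f s t * pd_t (pd_s f) s t))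
                  * det A * det B)))"
proof -
  obtain U where U: "open U" "punctured_quadrant \<subseteq> U" "smooth_on2 U f" using smooth by blast
  then have ck: "Ck_on2 (Suc (Suc 0)) U f" by (simp add: smooth_on2_def)
  interpret ps: prodsetting f U A B
    by unfold_locales (use U ck homog symA pdA symB pdB nonneg in auto)
  have fwd: "\<forall>y::real^('n1 + 'n2). y \<noteq> 0 \<longrightarrow>
             (let s = alpha1_sq A y; t = alpha2_sq B y in
                pd_s f s t > 0 \<and> pd_t f s t > 0 \<and>
                pd_s f s t + 2 * s * pd_s (pd_s f) s t > 0 \<and>
                pd_t f s t + 2 * t * pd_t (pd_t f) s t > 0 \<and>
                pd_s f s t * pd_t f s t - 2 * f s t * pd_t (pd_s f) s t > 0)"
    if H: "\<forall>y::real^('n1 + 'n2). y \<noteq> 0 \<longrightarrow> pos_def (gmat A B f y)"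
    using ps.fwd[OF H] unfolding Let_def by blast
  have bwd: "\<forall>y::real^('n1 + 'n2). y \<noteq> 0 \<longrightarrow> pos_def (gmat A B f y)"
    if C: "\<forall>y::real^('n1 + 'n2). y \<noteq> 0 \<longrightarrow>
             (let s = alpha1_sq A y; t = alpha2_sq B y in
                pd_s f s t > 0 \<and> pd_t f s t > 0 \<and>
                pd_s f s t + 2 * s * pd_s (pd_s f) s t > 0 \<and>
                pd_t f s t + 2 * t * pd_t (pd_t f) s t > 0 \<and>
                pd_s f s t * pd_t f s t - 2 * f s t * pd_t (pd_s f) s t > 0)"
    using C ps.bwd unfolding Let_def by blast
  have det: "\<forall>y::real^('n1 + 'n2). y \<noteq> 0 \<longrightarrow>
             (let s = alpha1_sq A y; t = alpha2_sq B y in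
                det (gmat A B f y) =
                  (pd_s f s t ^ (CARD('n1) - 1) * pd_t f s t ^ (CARD('n2) - 1) *
                   (pd_s f s t * pd_t f s t - 2 * f s t * pd_t (pd_s f) s t))
                  * det A * det B)"
    if H: "\<forall>y::real^('n1 + 'n2). y \<noteq> 0 \<longrightarrow> pos_def (gmat A B f y)"
  proof (intro allI impI)
    fix y :: "real^('n1 + 'n2)" assume y: "y \<noteq> 0"
    from ps.fwd[OF H y] have c: "pd_s f (alpha1_sq A y) (alpha2_sq B y) \<noteq> 0"
      "pd_t f (alpha1_sq A y) (alpha2_sq B y) \<noteq> 0"
      "pd_s f (alpha1_sq A y) (alpha2_sq B y) + 2 * alpha1_sq A y * pd_s (pd_s f) (alpha1_sq A y) (alpha2_sq B y) \<noteq> 0"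
      by auto
    show "let s = alpha1_sq A y; t = alpha2_sq B y in
                det (gmat A B f y) =
                  (pd_s f s t ^ (CARD('n1) - 1) * pd_t f s t ^ (CARD('n2) - 1) *
                   (pd_s f s t * pd_t f s t - 2 * f s t * pd_t (pd_s f) s t))
                  * det A * det B"
      unfolding Let_def by (rule ps.detg[OF y c])
  qed
  show ?thesis using fwd bwd det by blast
qed

end
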